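(* Let $p\ge1$. Let $\{\zeta_t\}$ be i.i.d. with $|\mu|_p=E|\zeta_0|^p<\infty$ and $E\zeta_0=0$ if $p>1$; let $a\in\mathbb R$; let $Q$ satisfy $|Q(x)-Q(y)|\le\mathrm{Lip}_Q|x-y|$ for all $x,y\in\mathbb R$; let real $b_j$ satisfy $|b_j|<c\,j^{-\gamma}$ for all $j\ge1$, for some $c>0$ and $\gamma>\max\{1/2,1/p\}$; and assume $K_p|\mu|_p\mathrm{Lip}_Q^pB_p<1$. Let $\{X_t\}$ and $\{r_t\}$ be stationary $L^p$-solutions of $X_t=\sum_{s<t}b_{t-s}\zeta_sQ(a+X_s)$ and $r_t=\zeta_tQ(a+\sum_{s<t}b_{t-s}r_s)$, respectively. Then $$\delta_p(k;\{X_t\})=O(k^{-\gamma})\quad\text{and}\quad\delta_p(k;\{r_t\})=O(k^{-\gamma}),\qquad k\to\infty.$$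
   Context: $|\mu|_p:=E|\zeta_0|^p$, $\mathcal F_t:=\sigma(\zeta_s,s\le t)$; adapted means $\mathcal F_t$-measurable, predictable means $\mathcal F_{t-1}$-measurable at each $t$. $B_p:=\sum_{j\ge1}|b_j|^p$ if $0<p<2$, $B_p:=(\sum_{j\ge1}b_j^2)^{p/2}$ if $p\ge2$. An $L^p$-solution of the $r$-equation is an adapted process with $E|r_t|^p<\infty$ such that for every $t$ the series $\sum_{s<t}b_{t-s}r_s$ converges in $L^p$ and the equation holds; an $L^p$-solution of the $X$-equation is a predictable process with $E|X_t|^p<\infty$ such that the series $\sum_{s<t}b_{t-s}\zeta_sQ(a+X_s)$ converges in $L^p$ for every $t$ and the equation holds. $K_p$ is the Rosenthal constant: a constant depending only on $p$ such that for every martingale difference sequence $\{Y_j,j\ge1\}$ (when $p>1$; arbitrary sequence when $p\le1$) with $E|Y_j|^p<\infty$ and convergent right-hand side, $E|\sum Y_j|^p\le K_p\sum E|Y_j|^p$ for $p\le2$ and $E|\sum Y_j|^p\le K_p(\sum(E|Y_j|^p)^{2/p})^{p/2}$ for $p>2$. For a stationary process written as a causal Bernoulli shift $y_t=f(\zeta_s,s\le t)$ with $f$ measurable, and $\zeta_0'$ an independent copy of $\zeta_0$ independent of $\{\zeta_t\}$, put $y_i':=f(\dots,\zeta_{-1},\zeta_0',\zeta_1,\dots,\zeta_i)$ (i.e. $\zeta_0$ replaced by $\zeta_0'$) and $\delta_p(i;\{y_t\}):=(E|y_i-y_i'|^p)^{1/p}$. The solutions $X_t,r_t$ are functions of $(\zeta_s,s\le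 t)$ and are regarded as such Bernoulli shifts. *)

theory Defs
  imports "HOL-Probability.Probability" "HOL-Library.Landau_Symbols"
begin

text \<open>Probability space: coordinates Some t carry zeta_t (t in Z), coordinate None
  carries the independent copy zeta_0'.\<close>

type_synonym omega = "int option \<Rightarrow> real"

definition iid_space :: "real measure \<Rightarrow> omega measure" where
  "iid_space \<mu> = PiM UNIV (\<lambda>_. \<mu>)"

definition past :: "omega \<Rightarrow> int \<Rightarrow> nat \<Rightarrow> real" where
  "past \<omega> t j = \<omega> (Some (t - int j))"

definition past' :: "omega \<Rightarrow> int \<Rightarrow> nat \<Rightarrow> real" where
  "past' \<omega> t j = (if t - int j = 0 then \<omega> None else \<omega> (Some (t - int j)))"

definition Bp :: "real \<Rightarrow> (nat \<Rightarrow> real) \<Rightarrow> real" where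
  "Bp p b = (if p < 2 then (\<Sum>j. \<bar>b (Suc j)\<bar> powr p)
             else (\<Sum>j. (b (Suc j))\<^sup>2) powr (p / 2))"

definition is_mds :: "'a measure \<Rightarrow> (nat \<Rightarrow> 'a \<Rightarrow> real) \<Rightarrow> bool" where
  "is_mds M Y \<longleftrightarrow> (\<exists>F. (\<forall>j. sigma_finite_subalgebra M (F j))
      \<and> (\<forall>i j. i \<le> j \<longrightarrow> sets (F i) \<subseteq> sets (F j))
      \<and> (\<forall>j. Y j \<in> borel_measurable (F (Suc j)))
      \<and> (\<forall>j. integrable M (Y j))
      \<and> (\<forall>j. AE x in M. real_cond_exp M (F j) (Y j) x = 0))"

text \<open>K is a Rosenthal constant for exponent p (on probability spaces over type 'a).
  Stated for finite sums, which is equivalent to the version for convergent series.\<close>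
definition rosenthal_const :: "'a itself \<Rightarrow> real \<Rightarrow> real \<Rightarrow> bool" where
  "rosenthal_const (_::'a itself) p K \<longleftrightarrow>
    (\<forall>(M::'a measure) Y n. prob_space M \<longrightarrow> (p > 1 \<longrightarrow> is_mds M Y)
      \<longrightarrow> (\<forall>j. Y j \<in> borel_measurable M)
      \<longrightarrow> (\<forall>j. integrable M (\<lambda>x. \<bar>Y j x\<bar> powr p))
      \<longrightarrow> (if p \<le> 2 then
             (\<integral>x. \<bar>\<Sum>j<n. Y j x\<bar> powr p \<partial>M) \<le> K * (\<Sum>j<n. \<integral>x. \<bar>Y j x\<bar> powr p \<partial>M)
           else
             (\<integral>x. \<bar>\<Sum>j<n. Y j x\<bar> powr p \<partial>M)
               \<le> K * (\<Sum>j<n. (\<integral>x. \<bar>Y j x\<bar> powr p \<partial>M) powr (2 / p)) powr (p / 2)))"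

definition Xsol :: "omega measure \<Rightarrow> real \<Rightarrow> real \<Rightarrow> (nat \<Rightarrow> real) \<Rightarrow> (real \<Rightarrow> real)
    \<Rightarrow> (int \<Rightarrow> omega \<Rightarrow> real) \<Rightarrow> bool" where
  "Xsol M p a b Q X \<longleftrightarrow> (\<forall>t. X t \<in> borel_measurable M
     \<and> integrable M (\<lambda>\<omega>. \<bar>X t \<omega>\<bar> powr p)
     \<and> ((\<lambda>n. \<integral>\<^sup>+\<omega>. ennreal (\<bar>X t \<omega> -
           (\<Sum>j\<in>{1..n}. b j * \<omega> (Some (t - int j)) * Q (a + X (t - int j) \<omega>))\<bar> powr p) \<partial>M)
         \<longlonglongrightarrow> 0))"

definition rsol :: "omega measure \<Rightarrow> real \<Rightarrow> real \<Rightarrow> (nat \<Rightarrow> real) \<Rightarrow> (real \<Rightarrow> real)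
    \<Rightarrow> (int \<Rightarrow> omega \<Rightarrow> real) \<Rightarrow> bool" where
  "rsol M p a b Q r \<longleftrightarrow> (\<forall>t. r t \<in> borel_measurable M
     \<and> integrable M (\<lambda>\<omega>. \<bar>r t \<omega>\<bar> powr p)
     \<and> (\<exists>Y \<in> borel_measurable M.
          ((\<lambda>n. \<integral>\<^sup>+\<omega>. ennreal (\<bar>Y \<omega> - (\<Sum>j\<in>{1..n}. b j * r (t - int j) \<omega>)\<bar> powr p) \<partial>M)
             \<longlonglongrightarrow> 0)
          \<and> (AE \<omega> in M. r t \<omega> = \<omega> (Some t) * Q (a + Y \<omega>))))"

text \<open>delta_p(i) for the Bernoulli shift y_i = f(zeta_i, zeta_(i-1), ...).\<close>
definition deltap :: "omega measure \<Rightarrow> real \<Rightarrow> ((nat \<Rightarrow> real) \<Rightarrow> real) \<Rightarrow> int \<Rightarrow> real" where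
  "deltap M p f i = (\<integral>\<omega>. \<bar>f (past \<omega> i) - f (past' \<omega> i)\<bar> powr p \<partial>M) powr (1 / p)"

end

theory Submission
  imports Defs
begin


lemma sum_shift_le_suminf:
  fixes a :: "nat \<Rightarrow> real"
  assumes "summable a" "\<forall>j. a j \<ge> 0" "finite S" "\<forall>k\<in>S. s < k"
  shows "(\<Sum>k\<in>S. a (k - s)) \<le> (\<Sum>j. a j)"
proof -
  have inj: "inj_on (\<lambda>k. k - s) S" using assms(4) by (intro inj_onI) force
  have "(\<Sum>k\<in>S. a (k - s)) = (\<Sum>j\<in>(\<lambda>k. k - s) ` S. a j)"
    by (simp add: sum.reindex[OF inj])
  also have "\<dots> \<le> (\<Sum>j. a j)"
    by (rule sum_le_suminf) (use assms in auto)
  finally show ?thesis .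
qed

lemma renewal_sum_bound:
  fixes v a :: "nat \<Rightarrow> real" and A \<beta> \<rho> :: real
  assumes "\<forall>k. v k \<ge> 0" "\<forall>j. a j \<ge> 0" "summable a" "(\<Sum>j. a j) \<le> \<rho>" "\<rho> < 1"
    and f: "\<forall>k\<ge>1. v k \<le> f k + (\<Sum>s\<in>{1..<k}. a (k-s) * v s)"
    and "summable f" "\<forall>k. f k \<ge> 0"
  shows "(\<Sum>k\<in>{1..N}. v k) \<le> (\<Sum>k. f k) / (1 - \<rho>)"
proof -
  have rho0: "0 \<le> \<rho>" using assms(4) suminf_nonneg[OF assms(3)] assms(2) by fastforce
  have "(\<Sum>k\<in>{1..N}. v k) \<le> (\<Sum>k\<in>{1..N}. f k + (\<Sum>s\<in>{1..<k}. a (k-s) * v s))"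
    by (rule sum_mono) (use f in auto)
  also have "\<dots> = (\<Sum>k\<in>{1..N}. f k) + (\<Sum>k\<in>{1..N}. \<Sum>s\<in>{1..<k}. a (k-s) * v s)"
    by (simp add: sum.distrib)
  also have "(\<Sum>k\<in>{1..N}. \<Sum>s\<in>{1..<k}. a (k-s) * v s)
      = (\<Sum>k\<in>{1..N}. \<Sum>s\<in>{s\<in>{1..N}. s < k}. a (k-s) * v s)"
    by (intro sum.cong refl) auto
  also have "\<dots> = (\<Sum>s\<in>{1..N}. \<Sum>k\<in>{k\<in>{1..N}. s < k}. a (k-s) * v s)"
    by (rule sum.swap_restrict) auto
  also have "\<dots> = (\<Sum>s\<in>{1..N}. v s * (\<Sum>k\<in>{k\<in>{1..N}. s < k}. a (k-s)))"
    by (simp add: sum_distrib_left mult.commute)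
  also have "\<dots> \<le> (\<Sum>s\<in>{1..N}. v s * \<rho>)"
  proof (rule sum_mono)
    fix s assume "s \<in> {1..N}"
    have "(\<Sum>k\<in>{k\<in>{1..N}. s < k}. a (k-s)) \<le> (\<Sum>j. a j)"
      by (rule sum_shift_le_suminf) (use assms in auto)
    then show "v s * (\<Sum>k\<in>{k\<in>{1..N}. s < k}. a (k-s)) \<le> v s * \<rho>"
      using assms(1,4) by (intro mult_left_mono) auto
  qed
  also have "(\<Sum>k\<in>{1..N}. f k) \<le> (\<Sum>k. f k)"
    by (rule sum_le_suminf) (use assms in auto)
  finally have "(\<Sum>k\<in>{1..N}. v k) \<le> (\<Sum>k. f k) + \<rho> * (\<Sum>k\<in>{1..N}. v k)"
    by (simp add: sum_distrib_left mult.commute)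
  then have "(1 - \<rho>) * (\<Sum>k\<in>{1..N}. v k) \<le> (\<Sum>k. f k)" by (simp add: algebra_simps)
  then show ?thesis using assms(5) by (simp add: field_simps)
qed

lemma sum_rev_le_suminf:
  fixes a :: "nat \<Rightarrow> real"
  assumes "summable a" "\<forall>j. a j \<ge> 0"
  shows "(\<Sum>s\<in>{1..<k}. a (k - s)) \<le> (\<Sum>j. a j)"
proof -
  have inj: "inj_on (\<lambda>s. k - s) {1..<k}" by (intro inj_onI) auto
  have "(\<Sum>s\<in>{1..<k}. a (k - s)) = (\<Sum>j\<in>(\<lambda>s. k - s) ` {1..<k}. a j)"
    by (subst sum.reindex[OF inj]) (simp add: comp_def)
  also have "\<dots> \<le> (\<Sum>j. a j)"
    by (rule sum_le_suminf) (use assms in auto)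
  finally show ?thesis .
qed

lemma renewal:
  fixes v a :: "nat \<Rightarrow> real" and A C \<beta> \<rho> :: real
  assumes b1: "\<beta> > 1" and v0: "\<forall>k. v k \<ge> 0" and a0: "\<forall>j. a j \<ge> 0" and sa: "summable a"
    and sr: "(\<Sum>j. a j) \<le> \<rho>" and r1: "\<rho> < 1"
    and aC: "\<forall>j\<ge>1. a j \<le> C * real j powr (-\<beta>)"
    and rec: "\<forall>k\<ge>1. v k \<le> A * real k powr (-\<beta>) + (\<Sum>s\<in>{1..<k}. a (k-s) * v s)"
  shows "\<exists>B. \<forall>k\<ge>1. v k \<le> B * real k powr (-\<beta>)"
proof -
  have rho0: "0 \<le> \<rho>" using sr suminf_nonneg[OF sa] a0 by fastforce
  have A0: "A \<ge> 0" using rec[rule_format, of 1] v0[rule_format, of 1] by simp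
  define f where "f k = (if k = 0 then 0 else A * real k powr (-\<beta>))" for k
  have "summable (\<lambda>k. real k powr (-\<beta>))" using b1 by (subst summable_real_powr_iff) simp
  then have "summable (\<lambda>k. A * real k powr (-\<beta>))" by (rule summable_mult)
  then have sf: "summable f" unfolding f_def
    by (rule summable_cong[THEN iffD1, rotated]) (auto intro!: always_eventually)
  have f0: "\<forall>k. f k \<ge> 0" using A0 by (auto simp: f_def)
  define S where "S = (\<Sum>k. f k) / (1 - \<rho>)"
  have S0: "S \<ge> 0" unfolding S_def using r1 suminf_nonneg[OF sf] f0 by auto
  have sumv: "(\<Sum>s\<in>{1..<k}. v s) \<le> S" for k
  proof -
    have "(\<Sum>s\<in>{1..<k}. v s) = (\<Sum>s\<in>{1..k-1}. v s)"
      by (intro sum.cong) auto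
    also have "\<dots> \<le> S" unfolding S_def
      by (rule renewal_sum_bound[OF v0 a0 sa sr r1 _ sf f0]) (use rec in \<open>auto simp: f_def\<close>)
    finally show ?thesis .
  qed
  define t where "t = (1 + \<rho>) / 2"
  have t: "0 < t" "t < 1" "\<rho> \<le> t" using rho0 r1 by (auto simp: t_def)
  define d where "d = t powr (1 / \<beta>)"
  have d: "0 < d" "d < 1" using t b1 powr_less_mono2[of "1/\<beta>" t 1] unfolding d_def by auto
  have dpow: "d powr \<beta> = t" unfolding d_def using t b1 by (simp add: powr_powr)
  define \<delta> where "\<delta> = 1 - d"
  have \<delta>: "0 < \<delta>" "\<delta> < 1" using d by (auto simp: \<delta>_def)
  define C' where "C' = max C 0"
  have C'0: "C' \<ge> 0" by (simp add: C'_def)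
  define \<rho>' where "\<rho>' = \<rho> / t"
  have r': "0 \<le> \<rho>'" "\<rho>' < 1" using t rho0 r1 by (auto simp: \<rho>'_def t_def field_simps)
  define B where "B = (A + C' * \<delta> powr (-\<beta>) * S) / (1 - \<rho>')"
  have B0: "B \<ge> 0" unfolding B_def using A0 C'0 S0 r' by auto
  have Beq: "A + C' * \<delta> powr (-\<beta>) * S + B * \<rho>' = B"
    using r' unfolding B_def by (simp add: field_simps)
  have main: "k \<ge> 1 \<Longrightarrow> v k \<le> B * real k powr (-\<beta>)" for k
  proof (induction k rule: less_induct)
    case (less k)
    have kpos: "real k > 0" using less.prems by auto
    have trm: "a (k-s) * v s \<le> C' * (\<delta> * k) powr (-\<beta>) * v s + a (k-s) * (B * (d * k) powr (-\<beta>))"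
      if s: "s \<in> {1..<k}" for s
    proof (cases "real s < d * k")
      case True
      have ks: "real (k - s) \<ge> \<delta> * k" using True s by (simp add: \<delta>_def of_nat_diff algebra_simps)
      have "a (k-s) \<le> C * real (k-s) powr (-\<beta>)" using aC[rule_format, of "k-s"] s by (simp del: of_nat_diff add: Suc_le_eq)
      also have "\<dots> \<le> C' * real (k-s) powr (-\<beta>)" by (intro mult_right_mono) (auto simp: C'_def)
      also have "\<dots> \<le> C' * (\<delta> * k) powr (-\<beta>)"
        using ks \<delta> kpos b1 C'0 by (intro mult_left_mono powr_mono2') auto
      finally have "a (k-s) * v s \<le> C' * (\<delta> * k) powr (-\<beta>) * v s"
        using v0 by (intro mult_right_mono) auto
      moreover have "a (k-s) * (B * (d * k) powr (-\<beta>)) \<ge> 0" using a0 B0 by auto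
      ultimately show ?thesis by linarith
    next
      case False
      have "v s \<le> B * real s powr (-\<beta>)" using less.IH[of s] s by auto
      also have "\<dots> \<le> B * (d * k) powr (-\<beta>)"
        using False d kpos b1 B0 by (intro mult_left_mono powr_mono2') auto
      finally have "a (k-s) * v s \<le> a (k-s) * (B * (d * k) powr (-\<beta>))"
        using a0 by (intro mult_left_mono) auto
      moreover have "C' * (\<delta> * k) powr (-\<beta>) * v s \<ge> 0" using C'0 v0 by auto
      ultimately show ?thesis by linarith
    qed
    have "v k \<le> A * real k powr (-\<beta>) + (\<Sum>s\<in>{1..<k}. a (k-s) * v s)" using rec less.prems by auto
    also have "(\<Sum>s\<in>{1..<k}. a (k-s) * v s)
       \<le> (\<Sum>s\<in>{1..<k}. C' * (\<delta> * k) powr (-\<beta>) * v s + a (k-s) * (B * (d * k) powr (-\<beta>)))"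
      by (rule sum_mono) (rule trm)
    also have "\<dots> = C' * (\<delta> * k) powr (-\<beta>) * (\<Sum>s\<in>{1..<k}. v s)
        + (B * (d * k) powr (-\<beta>)) * (\<Sum>s\<in>{1..<k}. a (k-s))"
      by (simp add: sum.distrib sum_distrib_left sum_distrib_right mult.commute)
    also have "\<dots> \<le> C' * (\<delta> * k) powr (-\<beta>) * S + (B * (d * k) powr (-\<beta>)) * \<rho>"
    proof (intro add_mono mult_left_mono)
      show "(\<Sum>s\<in>{1..<k}. v s) \<le> S" by (rule sumv)
      show "(\<Sum>s\<in>{1..<k}. a (k-s)) \<le> \<rho>" using sum_rev_le_suminf[OF sa a0, of k] sr by linarith
    qed (use C'0 B0 in auto)
    also have "(\<delta> * k) powr (-\<beta>) = \<delta> powr (-\<beta>) * real k powr (-\<beta>)"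
      using \<delta> kpos by (simp add: powr_mult)
    also have "(d * k) powr (-\<beta>) = real k powr (-\<beta>) / t"
      using d kpos dpow by (simp add: powr_mult powr_minus divide_inverse)
    finally have "v k \<le> real k powr (-\<beta>) * (A + C' * \<delta> powr (-\<beta>) * S + B * \<rho>')"
      by (simp add: \<rho>'_def algebra_simps)
    then show ?case using Beq by (simp add: mult.commute)
  qed
  show ?thesis using main by blast
qed




locale iid =
  fixes \<mu> :: "real measure"
  assumes prob_mu: "prob_space \<mu>" and sets_mu: "sets \<mu> = sets borel"
begin

abbreviation "M \<equiv> iid_space \<mu>"

lemma space_mu[simp]: "space \<mu> = UNIV"
  using sets_eq_imp_space_eq[OF sets_mu] by simp

lemma space_M[simp]: "space M = UNIV"
  by (simp add: iid_space_def space_PiM)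

lemma prob_M: "prob_space M"
  unfolding iid_space_def by (rule prob_space_PiM) (simp add: prob_mu)

lemma sets_M: "sets M = sets (PiM UNIV (\<lambda>_. borel))"
  unfolding iid_space_def by (rule sets_PiM_cong) (auto simp: sets_mu)

lemma meas_M_iff: "measurable M N = measurable (PiM UNIV (\<lambda>_::int option. borel)) N"
  by (rule measurable_cong_sets[OF sets_M refl])

lemma coord_meas[measurable]: "(\<lambda>\<omega>. \<omega> i) \<in> borel_measurable M"
  unfolding meas_M_iff by measurable

definition FJ :: "int option set \<Rightarrow> omega measure" where
  "FJ J = vimage_algebra UNIV (\<lambda>\<omega>. restrict \<omega> J) (PiM J (\<lambda>_. borel))"

lemma space_FJ[simp]: "space (FJ J) = UNIV" by (simp add: FJ_def)

lemma restrict_meas_M: "(\<lambda>\<omega>. restrict \<omega> J) \<in> measurable M (PiM J (\<lambda>_. borel))"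
  unfolding meas_M_iff by (rule measurable_restrict_subset) simp

lemma restrict_meas_FJ: "(\<lambda>\<omega>. restrict \<omega> J) \<in> measurable (FJ J) (PiM J (\<lambda>_. borel))"
  unfolding FJ_def by (rule measurable_vimage_algebra1) (auto simp: space_PiM)

lemma sets_FJ: "sets (FJ J) = {(\<lambda>\<omega>. restrict \<omega> J) -` B | B. B \<in> sets (PiM J (\<lambda>_. borel))}"
  unfolding FJ_def by (subst sets_vimage_algebra2) (auto simp: space_PiM)

lemma subalg_FJ: "subalgebra M (FJ J)"
  unfolding subalgebra_def
proof
  show "sets (FJ J) \<subseteq> sets M"
    unfolding sets_FJ using measurable_sets[OF restrict_meas_M] by auto
qed simp

lemma sfs_FJ: "sigma_finite_subalgebra M (FJ J)"
proof -
  interpret prob_space M by (rule prob_M)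
  interpret finite_measure_subalgebra M "FJ J" by unfold_locales (rule subalg_FJ)
  show ?thesis by (rule finite_measure_subalgebra_is_sigma_finite) unfold_locales
qed

lemma FJ_meas_M: "f \<in> measurable (FJ J) N \<Longrightarrow> f \<in> measurable M N"
  using measurable_from_subalg[OF subalg_FJ] by blast

lemma FJ_comp: "\<phi> \<in> measurable (PiM J (\<lambda>_. borel)) N \<Longrightarrow> (\<lambda>\<omega>. \<phi> (restrict \<omega> J)) \<in> measurable (FJ J) N"
  using measurable_comp[OF restrict_meas_FJ] by (auto simp: comp_def)

lemma FJ_mono:
  assumes "J \<subseteq> K" "f \<in> measurable (FJ J) N" shows "f \<in> measurable (FJ K) N"
proof -
  have "(\<lambda>x. x) \<in> measurable (FJ K) (FJ J)"
    unfolding FJ_def[of J]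
  proof (rule measurable_vimage_algebra2)
    have eq: "(\<lambda>x. restrict (restrict x K) J) = (\<lambda>x. restrict x J)"
      using assms(1) by (auto simp: fun_eq_iff restrict_def)
    have "(\<lambda>x. restrict (restrict x K) J) \<in> measurable (FJ K) (PiM J (\<lambda>_. borel))"
      by (rule FJ_comp, rule measurable_restrict_subset[OF assms(1)])
    then show "(\<lambda>x. restrict x J) \<in> measurable (FJ K) (PiM J (\<lambda>_. borel))" unfolding eq .
  qed simp
  from measurable_comp[OF this assms(2)] show ?thesis by (simp add: comp_def)
qed

lemma coord_FJ[measurable]: "i \<in> J \<Longrightarrow> (\<lambda>\<omega>. \<omega> i) \<in> borel_measurable (FJ J)"
  using FJ_comp[of "\<lambda>x. x i" J borel] by (simp add: measurable_component_singleton)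

lemma indep_coords: "prob_space.indep_vars M (\<lambda>_. \<mu>) (\<lambda>i \<omega>. \<omega> i) UNIV"
proof -
  interpret prob_space M by (rule prob_M)
  have rv: "random_variable \<mu> (\<lambda>\<omega>. \<omega> i)" for i
    unfolding iid_space_def by (rule measurable_component_singleton) simp
  have "distr M (PiM UNIV (\<lambda>_. \<mu>)) (\<lambda>x. \<lambda>i\<in>UNIV. x i) = PiM UNIV (\<lambda>i. distr M \<mu> (\<lambda>\<omega>. \<omega> i))"
  proof -
    have "distr M (PiM UNIV (\<lambda>_. \<mu>)) (\<lambda>x. \<lambda>i\<in>UNIV. x i) = distr M M (\<lambda>x. x)"
      by (simp add: iid_space_def restrict_def)
    also have "\<dots> = M" by simp
    also have "\<dots> = PiM UNIV (\<lambda>i. distr M \<mu> (\<lambda>\<omega>. \<omega> i))"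
      unfolding iid_space_def
      by (subst distr_PiM_component) (auto simp: prob_mu)
    finally show ?thesis .
  qed
  then show ?thesis by (subst indep_vars_iff_distr_eq_PiM[OF _ rv]) auto
qed

lemma indep_FJ:
  assumes "J \<inter> K = {}" "f \<in> borel_measurable (FJ J)" "g \<in> borel_measurable (FJ K)"
  shows "prob_space.indep_var M borel f borel g"
proof -
  interpret prob_space M by (rule prob_M)
  define KK where "KK = (\<lambda>b. if b then J else K)"
  have "indep_vars (\<lambda>b. PiM (KK b) (\<lambda>_. \<mu>)) (\<lambda>b \<omega>. restrict (\<lambda>i. \<omega> i) (KK b)) UNIV"
    by (rule indep_vars_restrict[OF indep_coords]) (use assms(1) in \<open>auto simp: disjoint_family_on_def KK_def\<close>)
  then have ind: "indep_sets (\<lambda>b. sigma_sets UNIV {(\<lambda>\<omega>. restrict \<omega> (KK b)) -` A | A. A \<in> sets (PiM (KK b) (\<lambda>_. \<mu>))}) UNIV"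
    by (simp add: indep_vars_def)
  have sPi: "sets (PiM L (\<lambda>_. \<mu>)) = sets (PiM L (\<lambda>_. borel))" for L
    by (rule sets_PiM_cong) (auto simp: sets_mu)
  show ?thesis
    unfolding indep_var_def indep_vars_def
  proof
    show "\<forall>i\<in>UNIV. random_variable (case_bool borel borel i) (case_bool f g i)"
      using FJ_meas_M assms(2,3) by (auto split: bool.split)
    show "indep_sets (\<lambda>i. sigma_sets (space M) {case_bool f g i -` A \<inter> space M |A. A \<in> sets (case_bool borel borel i)}) UNIV"
    proof (rule indep_sets_mono_sets[OF ind])
      fix b :: bool
      have "{case_bool f g b -` A \<inter> space M |A. A \<in> sets (case_bool borel borel b)} \<subseteq>
            sets (FJ (KK b))"
        using assms(2,3) by (cases b) (auto simp: KK_def measurable_def)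
      also have "\<dots> = {(\<lambda>\<omega>. restrict \<omega> (KK b)) -` A | A. A \<in> sets (PiM (KK b) (\<lambda>_. \<mu>))}"
        unfolding sets_FJ sPi ..
      finally show "sigma_sets (space M) {case_bool f g b -` A \<inter> space M |A. A \<in> sets (case_bool borel borel b)}
         \<subseteq> sigma_sets UNIV {(\<lambda>\<omega>. restrict \<omega> (KK b)) -` A | A. A \<in> sets (PiM (KK b) (\<lambda>_. \<mu>))}"
        by (simp add: sigma_sets_subseteq)
    qed
  qed
qed


definition swp :: "int option \<Rightarrow> int option" where
  "swp i = (if i = None then Some 0 else if i = Some 0 then None else i)"

definition sig :: "omega \<Rightarrow> omega" where
  "sig \<omega> = (\<lambda>i. \<omega> (swp i))"

lemma swp_swp[simp]: "swp (swp i) = i" by (auto simp: swp_def)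

lemma inj_swp: "inj swp" by (metis injI swp_swp)

lemma sig_sig[simp]: "sig (sig \<omega>) = \<omega>" by (simp add: sig_def)

lemma sig_Some[simp]: "t \<noteq> 0 \<Longrightarrow> sig \<omega> (Some t) = \<omega> (Some t)"
  by (simp add: sig_def swp_def)

lemma sig_Some0[simp]: "sig \<omega> (Some 0) = \<omega> None" by (simp add: sig_def swp_def)
lemma sig_None[simp]: "sig \<omega> None = \<omega> (Some 0)" by (simp add: sig_def swp_def)

lemma sig_meas[measurable]: "sig \<in> measurable M M"
proof -
  have "(\<lambda>\<omega> i. \<omega> (swp i)) \<in> measurable (PiM UNIV (\<lambda>_::int option. borel)) (PiM UNIV (\<lambda>_. borel))"
    by (rule measurable_PiM_single') auto
  then show ?thesis unfolding measurable_cong_sets[OF sets_M sets_M] sig_def .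
qed

lemma distr_sig: "distr M M sig = M"
proof -
  have "distr (PiM UNIV (\<lambda>_. \<mu>)) (PiM UNIV (\<lambda>i. \<mu>)) (\<lambda>\<omega>. \<lambda>n\<in>UNIV. \<omega> (swp n)) = PiM UNIV (\<lambda>i. \<mu>)"
    using distr_PiM_reindex[of UNIV "\<lambda>_. \<mu>" swp UNIV] inj_swp prob_mu by auto
  moreover have "(\<lambda>\<omega>. \<lambda>n\<in>UNIV. \<omega> (swp n)) = sig" by (auto simp: sig_def fun_eq_iff)
  ultimately show ?thesis by (simp add: iid_space_def)
qed

lemma nn_integral_sig:
  assumes "f \<in> borel_measurable M" shows "(\<integral>\<^sup>+\<omega>. f (sig \<omega>) \<partial>M) = (\<integral>\<^sup>+\<omega>. f \<omega> \<partial>M)"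
  using nn_integral_distr[OF sig_meas, of f] assms by (simp add: distr_sig)

lemma integral_sig:
  fixes f :: "omega \<Rightarrow> real"
  assumes "f \<in> borel_measurable M" shows "(\<integral>\<omega>. f (sig \<omega>) \<partial>M) = (\<integral>\<omega>. f \<omega> \<partial>M)"
  using integral_distr[OF sig_meas, of f] assms by (simp add: distr_sig)

lemma integrable_sig:
  fixes f :: "omega \<Rightarrow> real"
  assumes "f \<in> borel_measurable M" shows "integrable M (\<lambda>\<omega>. f (sig \<omega>)) \<longleftrightarrow> integrable M f"
  using integrable_distr_eq[OF sig_meas, of f] assms by (simp add: distr_sig)

lemma AE_sig:
  assumes "AE \<omega> in M. P \<omega>" shows "AE \<omega> in M. P (sig \<omega>)"
proof -
  have "AE x in distr M M sig. P x" by (subst distr_sig) (rule assms)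
  then show ?thesis by (rule AE_distrD[OF sig_meas])
qed

lemma past'_sig: "past' \<omega> t = past (sig \<omega>) t"
  by (auto simp: past'_def past_def fun_eq_iff)

lemma indep_mult:
  fixes f g :: "omega \<Rightarrow> real"
  assumes "J \<inter> K = {}" "f \<in> borel_measurable (FJ J)" "g \<in> borel_measurable (FJ K)"
    "integrable M f" "integrable M g"
  shows "integrable M (\<lambda>\<omega>. f \<omega> * g \<omega>)" "(\<integral>\<omega>. f \<omega> * g \<omega> \<partial>M) = (\<integral>\<omega>. f \<omega> \<partial>M) * (\<integral>\<omega>. g \<omega> \<partial>M)"
proof -
  interpret prob_space M by (rule prob_M)
  have ind: "indep_var borel f borel g" by (rule indep_FJ[OF assms(1-3)])
  show "integrable M (\<lambda>\<omega>. f \<omega> * g \<omega>)" by (rule indep_var_integrable[OF ind assms(4,5)])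
  show "(\<integral>\<omega>. f \<omega> * g \<omega> \<partial>M) = (\<integral>\<omega>. f \<omega> \<partial>M) * (\<integral>\<omega>. g \<omega> \<partial>M)"
    by (rule indep_var_lebesgue_integral[OF ind assms(4,5)])
qed

lemma cond_exp_zero:
  fixes u v Y :: "omega \<Rightarrow> real"
  assumes "J \<inter> K = {}" and u: "u \<in> borel_measurable (FJ J)" and v: "v \<in> borel_measurable (FJ K)"
    and "integrable M u" "integrable M v" "(\<integral>\<omega>. v \<omega> \<partial>M) = 0"
    and Y: "Y \<in> borel_measurable M" "integrable M Y" and AEY: "AE \<omega> in M. Y \<omega> = u \<omega> * v \<omega>"
  shows "AE \<omega> in M. real_cond_exp M (FJ J) Y \<omega> = 0"
proof -
  interpret sigma_finite_subalgebra M "FJ J" by (rule sfs_FJ)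
  show ?thesis
  proof (rule real_cond_exp_charact)
    fix A assume A: "A \<in> sets (FJ J)"
    have ind_meas: "indicator A \<in> borel_measurable (FJ J)" using A by simp
    have iu: "(\<lambda>\<omega>. indicator A \<omega> * u \<omega>) \<in> borel_measurable (FJ J)" using ind_meas u by measurable
    have iuint: "integrable M (\<lambda>\<omega>. indicator A \<omega> * u \<omega>)"
    proof -
      have "A \<in> sets M" using A subalg_FJ unfolding subalgebra_def by auto
      from integrable_mult_indicator[OF this assms(4)] show ?thesis by simp
    qed
    have AM: "A \<in> sets M" using A subalg_FJ unfolding subalgebra_def by auto
    have um: "u \<in> borel_measurable M" "v \<in> borel_measurable M" using u v FJ_meas_M by auto
    have "(\<integral>\<omega>\<in>A. Y \<omega> \<partial>M) = (\<integral>\<omega>. (indicator A \<omega> * u \<omega>) * v \<omega> \<partial>M)"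
      unfolding set_lebesgue_integral_def
      by (rule integral_cong_AE) (use AEY Y(1) AM um in auto)
    also have "\<dots> = 0"
      using indep_mult(2)[OF assms(1) iu v iuint assms(5)] assms(6) by simp
    finally show "(\<integral>\<omega>\<in>A. Y \<omega> \<partial>M) = (\<integral>\<omega>\<in>A. 0 \<partial>M)" by simp
  qed (use Y in auto)
qed

end



lemma powr_abs_add_le:
  fixes x y p :: real assumes "p > 0"
  shows "\<bar>x + y\<bar> powr p \<le> 2 powr p * (\<bar>x\<bar> powr p + \<bar>y\<bar> powr p)"
proof -
  define m where "m = max \<bar>x\<bar> \<bar>y\<bar>"
  have "\<bar>x\<bar> \<le> m" "\<bar>y\<bar> \<le> m" unfolding m_def by auto
  then have "\<bar>x + y\<bar> \<le> 2 * m" using abs_triangle_ineq[of x y] by linarith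
  then have "\<bar>x + y\<bar> powr p \<le> (2 * m) powr p" using assms by (intro powr_mono2) auto
  also have "\<dots> = 2 powr p * m powr p" by (simp add: powr_mult m_def)
  also have "m powr p \<le> \<bar>x\<bar> powr p + \<bar>y\<bar> powr p"
  proof (cases "\<bar>x\<bar> \<le> \<bar>y\<bar>")
    case True then have "m = \<bar>y\<bar>" unfolding m_def by simp
    then show ?thesis by simp
  next
    case False then have "m = \<bar>x\<bar>" unfolding m_def by simp
    then show ?thesis by simp
  qed
  finally show ?thesis by simp
qed

lemma abs_le_powr_eps:
  fixes x p e :: real assumes "p \<ge> 1" "e > 0"
  shows "\<bar>x\<bar> \<le> e + e powr (1 - p) * \<bar>x\<bar> powr p"
proof (cases "\<bar>x\<bar> \<le> e")
  case True
  have "0 \<le> e powr (1 - p) * \<bar>x\<bar> powr p" by simp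
  then show ?thesis using True by linarith
next
  case False
  then have xp: "\<bar>x\<bar> > 0" using assms by auto
  have ep: "e powr (p - 1) > 0" using assms by simp
  have "e powr (p - 1) \<le> \<bar>x\<bar> powr (p - 1)" using False assms by (intro powr_mono2) auto
  then have "\<bar>x\<bar> * e powr (p - 1) \<le> \<bar>x\<bar> * \<bar>x\<bar> powr (p - 1)" using xp by simp
  also have "\<bar>x\<bar> * \<bar>x\<bar> powr (p - 1) = \<bar>x\<bar> powr p" using xp by (simp add: powr_mult_base)
  finally have "\<bar>x\<bar> \<le> \<bar>x\<bar> powr p / e powr (p - 1)" using ep by (simp add: pos_le_divide_eq)
  also have "\<bar>x\<bar> powr p / e powr (p - 1) = e powr (1 - p) * \<bar>x\<bar> powr p"
  proof -
    have "e powr (1 - p) = inverse (e powr (p - 1))"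
      using assms by (simp add: powr_minus[symmetric])
    then show ?thesis by (simp add: divide_inverse mult.commute)
  qed
  finally show ?thesis using assms by simp
qed

context iid begin

lemma Lp_integrable:
  fixes f :: "omega \<Rightarrow> real"
  assumes "p \<ge> 1" "f \<in> borel_measurable M" "integrable M (\<lambda>\<omega>. \<bar>f \<omega>\<bar> powr p)"
  shows "integrable M f"
proof -
  interpret prob_space M by (rule prob_M)
  have "integrable M (\<lambda>\<omega>. 1 + \<bar>f \<omega>\<bar> powr p)" using assms(3) by simp
  then show ?thesis
  proof (rule Bochner_Integration.integrable_bound)
    show "AE x in M. norm (f x) \<le> norm (1 + \<bar>f x\<bar> powr p)"
      using abs_le_powr_eps[OF assms(1), of 1] by auto
  qed (rule assms(2))
qed

lemma nn_powr_add_le: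
  fixes A B :: "omega \<Rightarrow> real"
  assumes "p > 0" "A \<in> borel_measurable M" "B \<in> borel_measurable M"
  shows "(\<integral>\<^sup>+\<omega>. ennreal (\<bar>A \<omega> + B \<omega>\<bar> powr p) \<partial>M)
    \<le> ennreal (2 powr p) * ((\<integral>\<^sup>+\<omega>. ennreal (\<bar>A \<omega>\<bar> powr p) \<partial>M) + (\<integral>\<^sup>+\<omega>. ennreal (\<bar>B \<omega>\<bar> powr p) \<partial>M))"
proof -
  have "(\<integral>\<^sup>+\<omega>. ennreal (\<bar>A \<omega> + B \<omega>\<bar> powr p) \<partial>M)
     \<le> (\<integral>\<^sup>+\<omega>. ennreal (2 powr p) * (ennreal (\<bar>A \<omega>\<bar> powr p) + ennreal (\<bar>B \<omega>\<bar> powr p)) \<partial>M)"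
  proof (rule nn_integral_mono)
    fix \<omega>
    have "ennreal (\<bar>A \<omega> + B \<omega>\<bar> powr p) \<le> ennreal (2 powr p * (\<bar>A \<omega>\<bar> powr p + \<bar>B \<omega>\<bar> powr p))"
      by (rule ennreal_leI, rule powr_abs_add_le[OF assms(1)])
    then show "ennreal (\<bar>A \<omega> + B \<omega>\<bar> powr p) \<le> ennreal (2 powr p) * (ennreal (\<bar>A \<omega>\<bar> powr p) + ennreal (\<bar>B \<omega>\<bar> powr p))"
      by (simp add: ennreal_mult ennreal_plus)
  qed
  also have "\<dots> = ennreal (2 powr p) * ((\<integral>\<^sup>+\<omega>. ennreal (\<bar>A \<omega>\<bar> powr p) \<partial>M) + (\<integral>\<^sup>+\<omega>. ennreal (\<bar>B \<omega>\<bar> powr p) \<partial>M))"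
    using assms by (simp add: nn_integral_cmult nn_integral_add)
  finally show ?thesis .
qed

lemma Lp_limit_unique:
  fixes A B D :: "omega \<Rightarrow> real" and S T :: "nat \<Rightarrow> omega \<Rightarrow> real"
  assumes p: "p > 0" and meas: "A \<in> borel_measurable M" "B \<in> borel_measurable M" "D \<in> borel_measurable M"
    "\<And>n. S n \<in> borel_measurable M" "\<And>n. T n \<in> borel_measurable M"
    and limA: "(\<lambda>n. \<integral>\<^sup>+\<omega>. ennreal (\<bar>A \<omega> - S n \<omega>\<bar> powr p) \<partial>M) \<longlonglongrightarrow> 0"
    and limB: "(\<lambda>n. \<integral>\<^sup>+\<omega>. ennreal (\<bar>B \<omega> - T n \<omega>\<bar> powr p) \<partial>M) \<longlonglongrightarrow> 0"
    and eq: "\<And>n \<omega>. n \<ge> N \<Longrightarrow> S n \<omega> - T n \<omega> = D \<omega>"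
  shows "AE \<omega> in M. A \<omega> - B \<omega> = D \<omega>"
proof -
  let ?I = "\<integral>\<^sup>+\<omega>. ennreal (\<bar>A \<omega> - B \<omega> - D \<omega>\<bar> powr p) \<partial>M"
  let ?R = "\<lambda>n. ennreal (2 powr p) * ((\<integral>\<^sup>+\<omega>. ennreal (\<bar>A \<omega> - S n \<omega>\<bar> powr p) \<partial>M) + (\<integral>\<^sup>+\<omega>. ennreal (\<bar>B \<omega> - T n \<omega>\<bar> powr p) \<partial>M))"
  have le: "?I \<le> ?R n" if "n \<ge> N" for n
  proof -
    have "?I = (\<integral>\<^sup>+\<omega>. ennreal (\<bar>(A \<omega> - S n \<omega>) + (T n \<omega> - B \<omega>)\<bar> powr p) \<partial>M)"
    proof (intro nn_integral_cong)
      fix \<omega>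
      have e: "A \<omega> - B \<omega> - D \<omega> = (A \<omega> - S n \<omega>) + (T n \<omega> - B \<omega>)" using eq[OF that, of \<omega>] by simp
      show "ennreal (\<bar>A \<omega> - B \<omega> - D \<omega>\<bar> powr p) = ennreal (\<bar>(A \<omega> - S n \<omega>) + (T n \<omega> - B \<omega>)\<bar> powr p)"
        by (simp only: e)
    qed
    also have "\<dots> \<le> ennreal (2 powr p) * ((\<integral>\<^sup>+\<omega>. ennreal (\<bar>A \<omega> - S n \<omega>\<bar> powr p) \<partial>M) + (\<integral>\<^sup>+\<omega>. ennreal (\<bar>T n \<omega> - B \<omega>\<bar> powr p) \<partial>M))"
      by (rule nn_powr_add_le[OF p]) (use meas in auto)
    also have "(\<lambda>\<omega>. \<bar>T n \<omega> - B \<omega>\<bar>) = (\<lambda>\<omega>. \<bar>B \<omega> - T n \<omega>\<bar>)" by (simp add: abs_minus_commute)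
    finally show ?thesis .
  qed
  have "?R \<longlonglongrightarrow> ennreal (2 powr p) * (0 + 0)"
    by (intro tendsto_intros limA limB) auto
  then have "?I \<le> 0" using le by (intro LIMSEQ_le_const[of ?R]) auto
  then have "?I = 0" by simp
  then have "AE \<omega> in M. ennreal (\<bar>A \<omega> - B \<omega> - D \<omega>\<bar> powr p) = 0"
    by (subst (asm) nn_integral_0_iff_AE) (use meas in auto)
  then show ?thesis
  proof (rule AE_mp, intro AE_I2 impI)
    fix \<omega> assume "ennreal (\<bar>A \<omega> - B \<omega> - D \<omega>\<bar> powr p) = 0"
    then have "\<bar>A \<omega> - B \<omega> - D \<omega>\<bar> powr p = 0" by (simp add: ennreal_eq_0_iff)
    then show "A \<omega> - B \<omega> = D \<omega>" using p by simp
  qed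
qed


lemma integrable_powr_nn:
  fixes f :: "omega \<Rightarrow> real"
  assumes "f \<in> borel_measurable M" "(\<integral>\<^sup>+\<omega>. ennreal (\<bar>f \<omega>\<bar> powr p) \<partial>M) < \<infinity>"
  shows "integrable M (\<lambda>\<omega>. \<bar>f \<omega>\<bar> powr p)"
  by (rule integrableI_bounded) (use assms in auto)

lemma nn_powr_finite:
  fixes f :: "omega \<Rightarrow> real"
  assumes "integrable M (\<lambda>\<omega>. \<bar>f \<omega>\<bar> powr p)"
  shows "(\<integral>\<^sup>+\<omega>. ennreal (\<bar>f \<omega>\<bar> powr p) \<partial>M) < \<infinity>"
proof -
  have "(\<integral>\<^sup>+\<omega>. ennreal (\<bar>f \<omega>\<bar> powr p) \<partial>M) = (\<integral>\<^sup>+\<omega>. ennreal (norm (\<bar>f \<omega>\<bar> powr p)) \<partial>M)" by simp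
  also have "\<dots> < \<infinity>" using assms by (rule integrable_iff_bounded[THEN iffD1, THEN conjunct2])
  finally show ?thesis .
qed

lemma Lp_limit_integrable:
  fixes Z :: "omega \<Rightarrow> real" and S :: "nat \<Rightarrow> omega \<Rightarrow> real"
  assumes p: "p \<ge> 1" and Zm: "Z \<in> borel_measurable M" and Sm: "\<And>n. S n \<in> borel_measurable M"
    and Sint: "\<And>n. integrable M (\<lambda>\<omega>. \<bar>S n \<omega>\<bar> powr p)"
    and lim: "(\<lambda>n. \<integral>\<^sup>+\<omega>. ennreal (\<bar>Z \<omega> - S n \<omega>\<bar> powr p) \<partial>M) \<longlonglongrightarrow> 0"
  shows "integrable M (\<lambda>\<omega>. \<bar>Z \<omega>\<bar> powr p)"
proof -
  have "eventually (\<lambda>n. (\<integral>\<^sup>+\<omega>. ennreal (\<bar>Z \<omega> - S n \<omega>\<bar> powr p) \<partial>M) < 1) sequentially"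
    using lim by (rule order_tendstoD) simp
  then obtain N where N: "(\<integral>\<^sup>+\<omega>. ennreal (\<bar>Z \<omega> - S N \<omega>\<bar> powr p) \<partial>M) < 1"
    by (auto simp: eventually_sequentially)
  have "(\<integral>\<^sup>+\<omega>. ennreal (\<bar>(Z \<omega> - S N \<omega>) + S N \<omega>\<bar> powr p) \<partial>M)
     \<le> ennreal (2 powr p) * ((\<integral>\<^sup>+\<omega>. ennreal (\<bar>Z \<omega> - S N \<omega>\<bar> powr p) \<partial>M) + (\<integral>\<^sup>+\<omega>. ennreal (\<bar>S N \<omega>\<bar> powr p) \<partial>M))"
    by (rule nn_powr_add_le) (use p Zm Sm in auto)
  also have "\<dots> < \<infinity>"
  proof -
    have "(\<integral>\<^sup>+\<omega>. ennreal (\<bar>Z \<omega> - S N \<omega>\<bar> powr p) \<partial>M) < \<infinity>"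
      using N by (rule order.strict_trans) simp
    then show ?thesis using nn_powr_finite[OF Sint[of N]] by (simp add: ennreal_mult_less_top)
  qed
  finally show ?thesis by (intro integrable_powr_nn) (use Zm in auto)
qed

lemma Lp_limit_FJ_version:
  fixes Z :: "omega \<Rightarrow> real" and S :: "nat \<Rightarrow> omega \<Rightarrow> real"
  assumes p: "p \<ge> 1" and Zm: "Z \<in> borel_measurable M" and SF: "\<And>n. S n \<in> borel_measurable (FJ J)"
    and Sint: "\<And>n. integrable M (\<lambda>\<omega>. \<bar>S n \<omega>\<bar> powr p)"
    and lim: "(\<lambda>n. \<integral>\<^sup>+\<omega>. ennreal (\<bar>Z \<omega> - S n \<omega>\<bar> powr p) \<partial>M) \<longlonglongrightarrow> 0"
  shows "\<exists>Z'\<in>borel_measurable (FJ J). AE \<omega> in M. Z \<omega> = Z' \<omega>"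
proof -
  interpret prob_space M by (rule prob_M)
  interpret sigma_finite_subalgebra M "FJ J" by (rule sfs_FJ)
  have Sm: "S n \<in> borel_measurable M" for n using SF FJ_meas_M by blast
  have Zint: "integrable M Z"
    by (rule Lp_integrable[OF p Zm Lp_limit_integrable[OF p Zm Sm Sint lim]])
  have SI: "integrable M (S n)" for n by (rule Lp_integrable[OF p Sm Sint])
  define Z' where "Z' = real_cond_exp M (FJ J) Z"
  have Z'm: "Z' \<in> borel_measurable (FJ J)" unfolding Z'_def by simp
  have Z'M: "Z' \<in> borel_measurable M" using Z'm FJ_meas_M by blast
  have bound: "(\<integral>\<^sup>+\<omega>. ennreal \<bar>Z \<omega> - Z' \<omega>\<bar> \<partial>M) \<le> 2 * (\<integral>\<^sup>+\<omega>. ennreal \<bar>Z \<omega> - S n \<omega>\<bar> \<partial>M)" for n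
  proof -
    have AE1: "AE \<omega> in M. real_cond_exp M (FJ J) (\<lambda>x. S n x - Z x) \<omega> = S n \<omega> - Z' \<omega>"
      using real_cond_exp_diff[OF SI[of n] Zint] real_cond_exp_F_meas[OF SI[of n] SF[of n]] unfolding Z'_def
      by eventually_elim auto
    have "(\<integral>\<^sup>+\<omega>. ennreal \<bar>S n \<omega> - Z' \<omega>\<bar> \<partial>M) = (\<integral>\<^sup>+\<omega>. ennreal \<bar>real_cond_exp M (FJ J) (\<lambda>x. S n x - Z x) \<omega>\<bar> \<partial>M)"
      by (rule nn_integral_cong_AE) (use AE1 in auto)
    also have "\<dots> \<le> (\<integral>\<^sup>+\<omega>. nn_cond_exp M (FJ J) (\<lambda>x. ennreal \<bar>S n x - Z x\<bar>) \<omega> \<partial>M)"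
      by (rule nn_integral_mono_AE) (rule real_cond_exp_abs, use Sm Zm in auto)
    also have "\<dots> = (\<integral>\<^sup>+\<omega>. 1 * nn_cond_exp M (FJ J) (\<lambda>x. ennreal \<bar>S n x - Z x\<bar>) \<omega> \<partial>M)" by simp
    also have "\<dots> = (\<integral>\<^sup>+\<omega>. 1 * ennreal \<bar>S n \<omega> - Z \<omega>\<bar> \<partial>M)"
      by (rule nn_cond_exp_intg) (use Sm Zm in auto)
    finally have b1: "(\<integral>\<^sup>+\<omega>. ennreal \<bar>S n \<omega> - Z' \<omega>\<bar> \<partial>M) \<le> (\<integral>\<^sup>+\<omega>. ennreal \<bar>Z \<omega> - S n \<omega>\<bar> \<partial>M)"
      by (simp add: abs_minus_commute)
    have "(\<integral>\<^sup>+\<omega>. ennreal \<bar>Z \<omega> - Z' \<omega>\<bar> \<partial>M) \<le> (\<integral>\<^sup>+\<omega>. ennreal \<bar>Z \<omega> - S n \<omega>\<bar> + ennreal \<bar>S n \<omega> - Z' \<omega>\<bar> \<partial>M)"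
      by (rule nn_integral_mono) (simp add: ennreal_plus[symmetric] del: ennreal_plus)
    also have "\<dots> = (\<integral>\<^sup>+\<omega>. ennreal \<bar>Z \<omega> - S n \<omega>\<bar> \<partial>M) + (\<integral>\<^sup>+\<omega>. ennreal \<bar>S n \<omega> - Z' \<omega>\<bar> \<partial>M)"
      by (rule nn_integral_add) (use Sm Zm Z'M in auto)
    also have "\<dots> \<le> (\<integral>\<^sup>+\<omega>. ennreal \<bar>Z \<omega> - S n \<omega>\<bar> \<partial>M) + (\<integral>\<^sup>+\<omega>. ennreal \<bar>Z \<omega> - S n \<omega>\<bar> \<partial>M)"
      using b1 by (rule add_left_mono)
    finally show ?thesis by (simp add: mult_2)
  qed
  have eps: "(\<integral>\<^sup>+\<omega>. ennreal \<bar>Z \<omega> - S n \<omega>\<bar> \<partial>M) \<le> ennreal e + ennreal (e powr (1 - p)) * (\<integral>\<^sup>+\<omega>. ennreal (\<bar>Z \<omega> - S n \<omega>\<bar> powr p) \<partial>M)"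
    if e: "e > 0" for n e
  proof -
    have "(\<integral>\<^sup>+\<omega>. ennreal \<bar>Z \<omega> - S n \<omega>\<bar> \<partial>M) \<le> (\<integral>\<^sup>+\<omega>. ennreal e + ennreal (e powr (1 - p)) * ennreal (\<bar>Z \<omega> - S n \<omega>\<bar> powr p) \<partial>M)"
    proof (rule nn_integral_mono)
      fix \<omega>
      have "ennreal \<bar>Z \<omega> - S n \<omega>\<bar> \<le> ennreal (e + e powr (1 - p) * \<bar>Z \<omega> - S n \<omega>\<bar> powr p)"
        by (rule ennreal_leI, rule abs_le_powr_eps[OF p e])
      then show "ennreal \<bar>Z \<omega> - S n \<omega>\<bar> \<le> ennreal e + ennreal (e powr (1 - p)) * ennreal (\<bar>Z \<omega> - S n \<omega>\<bar> powr p)"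
        using e by (simp add: ennreal_plus ennreal_mult)
    qed
    also have "\<dots> = (\<integral>\<^sup>+\<omega>. ennreal e \<partial>M) + ennreal (e powr (1 - p)) * (\<integral>\<^sup>+\<omega>. ennreal (\<bar>Z \<omega> - S n \<omega>\<bar> powr p) \<partial>M)"
      by (subst nn_integral_add) (use Sm Zm in \<open>auto simp: nn_integral_cmult\<close>)
    also have "(\<integral>\<^sup>+\<omega>. ennreal e \<partial>M) = ennreal e" using emeasure_space_1 by simp
    finally show ?thesis .
  qed
  have zero: "(\<integral>\<^sup>+\<omega>. ennreal \<bar>Z \<omega> - Z' \<omega>\<bar> \<partial>M) \<le> 0 + ennreal e" if e: "e > 0" for e
  proof -
    have "(\<lambda>n. 2 * (ennreal (e/2) + ennreal ((e/2) powr (1 - p)) * (\<integral>\<^sup>+\<omega>. ennreal (\<bar>Z \<omega> - S n \<omega>\<bar> powr p) \<partial>M)))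
       \<longlonglongrightarrow> 2 * (ennreal (e/2) + ennreal ((e/2) powr (1 - p)) * 0)"
      by (intro tendsto_intros lim) auto
    moreover have "(\<integral>\<^sup>+\<omega>. ennreal \<bar>Z \<omega> - Z' \<omega>\<bar> \<partial>M) \<le> 2 * (ennreal (e/2) + ennreal ((e/2) powr (1 - p)) * (\<integral>\<^sup>+\<omega>. ennreal (\<bar>Z \<omega> - S n \<omega>\<bar> powr p) \<partial>M))" for n
      using bound[of n] eps[of "e/2" n] e by (meson order.trans mult_left_mono zero_le half_gt_zero)
    ultimately have "(\<integral>\<^sup>+\<omega>. ennreal \<bar>Z \<omega> - Z' \<omega>\<bar> \<partial>M) \<le> 2 * (ennreal (e/2) + ennreal ((e/2) powr (1 - p)) * 0)"
      by (intro LIMSEQ_le_const) auto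
    also have "\<dots> = ennreal e"
    proof -
      have "ennreal 2 * ennreal (e/2) = ennreal (2 * (e/2))" using e by (subst ennreal_mult) auto
      then show ?thesis by simp
    qed
    finally show ?thesis by simp
  qed
  have "(\<integral>\<^sup>+\<omega>. ennreal \<bar>Z \<omega> - Z' \<omega>\<bar> \<partial>M) \<le> 0"
    by (rule ennreal_le_epsilon) (rule zero)
  then have "(\<integral>\<^sup>+\<omega>. ennreal \<bar>Z \<omega> - Z' \<omega>\<bar> \<partial>M) = 0" by simp
  then have "AE \<omega> in M. ennreal \<bar>Z \<omega> - Z' \<omega>\<bar> = 0"
    by (subst (asm) nn_integral_0_iff_AE) (use Zm Z'M in auto)
  then have "AE \<omega> in M. Z \<omega> = Z' \<omega>" by eventually_elim simp
  then show ?thesis using Z'm by blast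
qed

end



lemma bound_powr_b:
  fixes b :: "nat \<Rightarrow> real" and c \<gamma> r :: real
  assumes "c > 0" "r > 0" "\<forall>j\<ge>1. \<bar>b j\<bar> < c * real j powr (-\<gamma>)" "j \<ge> 1"
  shows "\<bar>b j\<bar> powr r \<le> c powr r * real j powr (-(\<gamma> * r))"
proof -
  have "\<bar>b j\<bar> powr r \<le> (c * real j powr (-\<gamma>)) powr r"
    using assms by (intro powr_mono2) (auto intro: less_imp_le)
  also have "\<dots> = c powr r * real j powr (-(\<gamma> * r))"
    using assms by (simp add: powr_mult powr_powr)
  finally show ?thesis .
qed

lemma summable_b_powr:
  fixes b :: "nat \<Rightarrow> real" and c \<gamma> r :: real
  assumes "c > 0" "r > 0" "\<forall>j\<ge>1. \<bar>b j\<bar> < c * real j powr (-\<gamma>)" "\<gamma> * r > 1"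
  shows "summable (\<lambda>j. \<bar>b j\<bar> powr r)"
proof (rule summable_comparison_test)
  have "summable (\<lambda>j. real j powr (-(\<gamma> * r)))" using assms(4) by (subst summable_real_powr_iff) simp
  then show "summable (\<lambda>j. c powr r * real j powr (-(\<gamma> * r)))" by (rule summable_mult)
  show "\<exists>N. \<forall>n\<ge>N. norm (\<bar>b n\<bar> powr r) \<le> c powr r * real n powr (-(\<gamma> * r))"
    using bound_powr_b[OF assms(1-3)] by (intro exI[of _ 1]) auto
qed

lemma final_rate_aux:
  fixes v :: "nat \<Rightarrow> real" and a :: "nat \<Rightarrow> real" and A \<beta> \<rho> C :: real
  assumes "\<beta> > 1" "\<forall>k. v k \<ge> 0" "\<forall>j. a j \<ge> 0" "summable a" "(\<Sum>j. a j) < 1"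
    "\<forall>j\<ge>1. a j \<le> C * real j powr (-\<beta>)"
    "\<forall>k\<ge>1. v k \<le> A * real k powr (-\<beta>) + (\<Sum>s\<in>{1..<k}. a (k-s) * v s)"
  shows "\<exists>B\<ge>0. \<forall>k\<ge>1. v k \<le> B * real k powr (-\<beta>)"
proof -
  obtain B where B: "\<forall>k\<ge>1. v k \<le> B * real k powr (-\<beta>)"
    using renewal[OF assms(1-4) order.refl assms(5-7)] by blast
  have "0 \<le> v 1" using assms(2) by auto
  then have "B \<ge> 0" using B[rule_format, of 1] by simp
  with B show ?thesis by blast
qed

lemma final_le2:
  fixes u b :: "nat \<Rightarrow> real" and p K c1 C0 c \<gamma> :: real
  assumes p: "p \<ge> 1" "p \<le> 2" and u0: "\<forall>k. u k \<ge> 0" and K: "K \<ge> 0" and c1: "c1 \<ge> 0" and C0: "C0 \<ge> 0"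
    and c: "c > 0" and g: "\<gamma> * p > 1" and bb: "\<forall>j\<ge>1. \<bar>b j\<bar> < c * real j powr (-\<gamma>)"
    and contr: "K * c1 * (\<Sum>j. \<bar>b (Suc j)\<bar> powr p) < 1"
    and rec: "\<forall>k\<ge>1. u k \<le> K * (\<bar>b k\<bar> powr p * C0 + (\<Sum>s\<in>{1..<k}. \<bar>b (k-s)\<bar> powr p * c1 * u s))"
  shows "\<exists>B\<ge>0. \<forall>k\<ge>1. u k \<le> B * real k powr (-(\<gamma> * p))"
proof -
  define a where "a j = (if j = 0 then 0 else K * c1 * \<bar>b j\<bar> powr p)" for j
  have pp: "p > 0" using p by simp
  have sb: "summable (\<lambda>j. \<bar>b j\<bar> powr p)" by (rule summable_b_powr[OF c pp bb g])
  have sa: "summable a"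
  proof -
    have "summable (\<lambda>j. K * c1 * \<bar>b (Suc j)\<bar> powr p)"
      using summable_ignore_initial_segment[OF sb, of 1] by (intro summable_mult) simp
    then have "summable (\<lambda>j. a (Suc j))" by (simp add: a_def)
    then show ?thesis by (rule summable_Suc_iff[THEN iffD1])
  qed
  have a0: "\<forall>j. a j \<ge> 0" using K c1 by (auto simp: a_def)
  have "(\<Sum>j. a j) = (\<Sum>j. a (Suc j)) + a 0" using suminf_split_head[OF sa] by simp
  also have "(\<Sum>j. a (Suc j)) = K * c1 * (\<Sum>j. \<bar>b (Suc j)\<bar> powr p)"
    unfolding a_def by (simp add: suminf_mult[OF summable_ignore_initial_segment[OF sb, of 1], simplified])
  finally have suma: "(\<Sum>j. a j) < 1" using contr by (simp add: a_def)
  have aC: "\<forall>j\<ge>1. a j \<le> (K * c1 * c powr p) * real j powr (-(\<gamma> * p))"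
  proof (intro allI impI)
    fix j :: nat assume j: "j \<ge> 1"
    have "\<bar>b j\<bar> powr p \<le> c powr p * real j powr (-(\<gamma> * p))" by (rule bound_powr_b[OF c pp bb j])
    then show "a j \<le> (K * c1 * c powr p) * real j powr (-(\<gamma> * p))"
      using j K c1 unfolding a_def by (simp add: mult_left_mono mult.assoc)
  qed
  have recv: "\<forall>k\<ge>1. u k \<le> (K * C0 * c powr p) * real k powr (-(\<gamma> * p)) + (\<Sum>s\<in>{1..<k}. a (k-s) * u s)"
  proof (intro allI impI)
    fix k :: nat assume k: "k \<ge> 1"
    have "u k \<le> K * (\<bar>b k\<bar> powr p * C0 + (\<Sum>s\<in>{1..<k}. \<bar>b (k-s)\<bar> powr p * c1 * u s))" using rec k by auto
    also have "\<dots> = K * C0 * \<bar>b k\<bar> powr p + (\<Sum>s\<in>{1..<k}. a (k-s) * u s)"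
      by (simp add: a_def sum_distrib_left algebra_simps)
    also have "K * C0 * \<bar>b k\<bar> powr p \<le> K * C0 * (c powr p * real k powr (-(\<gamma> * p)))"
      using bound_powr_b[OF c pp bb k] K C0 by (intro mult_left_mono) auto
    finally show "u k \<le> (K * C0 * c powr p) * real k powr (-(\<gamma> * p)) + (\<Sum>s\<in>{1..<k}. a (k-s) * u s)"
      by (simp add: mult.assoc)
  qed
  show ?thesis by (rule final_rate_aux[OF _ u0 a0 sa suma aC recv]) (use g in simp)
qed

lemma abs_powr_2: "\<bar>x::real\<bar> powr 2 = x\<^sup>2"
  by (cases "x = 0") (simp_all add: powr_numeral)

lemma final_gt2:
  fixes u b :: "nat \<Rightarrow> real" and p K c1 C0 c \<gamma> :: real
  assumes p: "p > 2" and u0: "\<forall>k. u k \<ge> 0" and K: "K \<ge> 0" and c1: "c1 \<ge> 0" and C0: "C0 \<ge> 0"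
    and c: "c > 0" and g: "\<gamma> * 2 > 1" and bb: "\<forall>j\<ge>1. \<bar>b j\<bar> < c * real j powr (-\<gamma>)"
    and contr: "K * c1 * (\<Sum>j. (b (Suc j))\<^sup>2) powr (p / 2) < 1"
    and rec: "\<forall>k\<ge>1. u k \<le> K * ((\<bar>b k\<bar> powr p * C0) powr (2 / p)
              + (\<Sum>s\<in>{1..<k}. (\<bar>b (k-s)\<bar> powr p * c1 * u s) powr (2 / p))) powr (p / 2)"
  shows "\<exists>B\<ge>0. \<forall>k\<ge>1. u k powr (2 / p) \<le> B * real k powr (-(\<gamma> * 2))"
proof -
  define q where "q = 2 / p"
  have q: "q > 0" "q < 1" using p by (auto simp: q_def)
  have pq: "p * q = 2" using p by (simp add: q_def)
  define v where "v k = u k powr q" for k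
  have v0: "\<forall>k. v k \<ge> 0" by (simp add: v_def)
  define a where "a j = (if j = 0 then 0 else (K * c1) powr q * \<bar>b j\<bar> powr 2)" for j
  have sb: "summable (\<lambda>j. \<bar>b j\<bar> powr 2)" by (rule summable_b_powr[OF c _ bb g]) simp
  have sa: "summable a"
  proof -
    have "summable (\<lambda>j. (K * c1) powr q * \<bar>b (Suc j)\<bar> powr 2)"
      using summable_ignore_initial_segment[OF sb, of 1] by (intro summable_mult) simp
    then have "summable (\<lambda>j. a (Suc j))" by (simp add: a_def)
    then show ?thesis by (rule summable_Suc_iff[THEN iffD1])
  qed
  have a0: "\<forall>j. a j \<ge> 0" by (auto simp: a_def)
  define S2 where "S2 = (\<Sum>j. (b (Suc j))\<^sup>2)"
  have S2: "S2 \<ge> 0" unfolding S2_def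
    using summable_ignore_initial_segment[OF sb, of 1] by (intro suminf_nonneg) (simp_all add: abs_powr_2)
  have "(\<Sum>j. a j) = (\<Sum>j. a (Suc j)) + a 0" using suminf_split_head[OF sa] by simp
  also have "(\<Sum>j. a (Suc j)) = (K * c1) powr q * S2"
    unfolding a_def S2_def using summable_ignore_initial_segment[OF sb, of 1]
    by (simp add: suminf_mult abs_powr_2)
  finally have suma_eq: "(\<Sum>j. a j) = (K * c1) powr q * S2" by (simp add: a_def)
  have "(K * c1 * S2 powr (p / 2)) powr q < 1 powr q"
    using contr K c1 S2 q by (intro powr_less_mono2) (auto simp: S2_def)
  moreover have "(K * c1 * S2 powr (p / 2)) powr q = (K * c1) powr q * S2"
    using K c1 S2 p by (simp add: powr_mult powr_powr q_def)
  ultimately have suma: "(\<Sum>j. a j) < 1" using suma_eq by simp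
  have aC: "\<forall>j\<ge>1. a j \<le> ((K * c1) powr q * c powr 2) * real j powr (-(\<gamma> * 2))"
  proof (intro allI impI)
    fix j :: nat assume j: "j \<ge> 1"
    have "\<bar>b j\<bar> powr 2 \<le> c powr 2 * real j powr (-(\<gamma> * 2))" by (rule bound_powr_b[OF c _ bb j]) simp
    then show "a j \<le> ((K * c1) powr q * c powr 2) * real j powr (-(\<gamma> * 2))"
      using j unfolding a_def by (simp add: mult_left_mono mult.assoc)
  qed
  have recv: "\<forall>k\<ge>1. v k \<le> (K powr q * C0 powr q * c powr 2) * real k powr (-(\<gamma> * 2)) + (\<Sum>s\<in>{1..<k}. a (k-s) * v s)"
  proof (intro allI impI)
    fix k :: nat assume k: "k \<ge> 1"
    define X where "X = (\<bar>b k\<bar> powr p * C0) powr q + (\<Sum>s\<in>{1..<k}. (\<bar>b (k-s)\<bar> powr p * c1 * u s) powr q)"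
    have X0: "X \<ge> 0" unfolding X_def by (intro add_nonneg_nonneg sum_nonneg) auto
    have "u k \<le> K * X powr (p / 2)" using rec k unfolding X_def q_def by auto
    then have "v k \<le> (K * X powr (p / 2)) powr q"
      unfolding v_def using u0 q by (intro powr_mono2) auto
    also have "\<dots> = K powr q * X"
      using K X0 p by (simp add: powr_mult powr_powr q_def)
    also have "X = \<bar>b k\<bar> powr 2 * C0 powr q + (\<Sum>s\<in>{1..<k}. \<bar>b (k-s)\<bar> powr 2 * c1 powr q * v s)"
    proof -
      have e1: "(\<bar>b j\<bar> powr p * y) powr q = \<bar>b j\<bar> powr 2 * y powr q" if "y \<ge> 0" for j y
        using that pq by (simp add: powr_mult powr_powr)
      have e2: "(\<bar>b j\<bar> powr p * c1 * u s) powr q = \<bar>b j\<bar> powr 2 * c1 powr q * v s" for j s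
        using e1[of "c1 * u s" j] c1 u0 by (simp add: v_def powr_mult mult.assoc)
      show ?thesis unfolding X_def using e1[OF C0] e2 by simp
    qed
    also have "K powr q * (\<bar>b k\<bar> powr 2 * C0 powr q + (\<Sum>s\<in>{1..<k}. \<bar>b (k-s)\<bar> powr 2 * c1 powr q * v s))
       = K powr q * C0 powr q * \<bar>b k\<bar> powr 2 + (\<Sum>s\<in>{1..<k}. a (k-s) * v s)"
      using K c1 by (simp add: a_def sum_distrib_left powr_mult algebra_simps)
    also have "K powr q * C0 powr q * \<bar>b k\<bar> powr 2 \<le> K powr q * C0 powr q * (c powr 2 * real k powr (-(\<gamma> * 2)))"
      using bound_powr_b[OF c _ bb k, of 2] by (intro mult_left_mono) auto
    finally show "v k \<le> (K powr q * C0 powr q * c powr 2) * real k powr (-(\<gamma> * 2)) + (\<Sum>s\<in>{1..<k}. a (k-s) * v s)"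
      by (simp add: mult.assoc)
  qed
  obtain B where "B \<ge> 0" "\<forall>k\<ge>1. v k \<le> B * real k powr (-(\<gamma> * 2))"
    using final_rate_aux[OF _ v0 a0 sa suma aC recv] g by auto
  then show ?thesis unfolding v_def q_def by blast
qed

lemma final_rate:
  fixes u b :: "nat \<Rightarrow> real" and p K c1 C0 c \<gamma> :: real
  assumes p: "p \<ge> 1" and u0: "\<forall>k. u k \<ge> 0" and c1: "c1 \<ge> 0" and C0: "C0 \<ge> 0"
    and c: "c > 0" and g: "\<gamma> > max (1/2) (1/p)" and bb: "\<forall>j\<ge>1. \<bar>b j\<bar> < c * real j powr (-\<gamma>)"
    and contr: "K * c1 * Bp p b < 1"
    and rec2: "p \<le> 2 \<longrightarrow> (\<forall>k\<ge>1. u k \<le> max K 0 * (\<bar>b k\<bar> powr p * C0 + (\<Sum>s\<in>{1..<k}. \<bar>b (k-s)\<bar> powr p * c1 * u s)))"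
    and recg: "p > 2 \<longrightarrow> (\<forall>k\<ge>1. u k \<le> max K 0 * ((\<bar>b k\<bar> powr p * C0) powr (2 / p)
              + (\<Sum>s\<in>{1..<k}. (\<bar>b (k-s)\<bar> powr p * c1 * u s) powr (2 / p))) powr (p / 2))"
  shows "(\<lambda>k. u k powr (1 / p)) \<in> O(\<lambda>k. real k powr (-\<gamma>))"
proof -
  define K' where "K' = max K 0"
  have K': "K' \<ge> 0" by (simp add: K'_def)
  have g1: "\<gamma> * p > 1" using g p by (auto simp: field_simps)
  have g2: "\<gamma> * 2 > 1" using g by auto
  have contr': "K' * c1 * Bp p b < 1"
  proof (cases "K \<le> 0")
    case True then show ?thesis by (simp add: K'_def)
  next
    case False then show ?thesis using contr by (simp add: K'_def)
  qed
  have "\<exists>B\<ge>0. \<forall>k\<ge>1. u k powr (1 / p) \<le> B * real k powr (-\<gamma>)"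
  proof (cases "p \<le> 2")
    case True
    have Bpe: "Bp p b = (\<Sum>j. \<bar>b (Suc j)\<bar> powr p)"
    proof (cases "p < 2")
      case True then show ?thesis by (simp add: Bp_def)
    next
      case False then have "p = 2" using \<open>p \<le> 2\<close> by simp
      have sb: "summable (\<lambda>j. \<bar>b j\<bar> powr 2)" by (rule summable_b_powr[OF c _ bb g2]) simp
      have "0 \<le> (\<Sum>j. (b (Suc j))\<^sup>2)"
        using summable_ignore_initial_segment[OF sb, of 1] by (intro suminf_nonneg) (simp_all add: abs_powr_2)
      then show ?thesis using \<open>p = 2\<close> by (simp add: Bp_def abs_powr_2)
    qed
    obtain B where B: "B \<ge> 0" "\<forall>k\<ge>1. u k \<le> B * real k powr (-(\<gamma> * p))"
      using final_le2[OF p True u0 K' c1 C0 c g1 bb] contr' rec2 True unfolding Bpe K'_def by auto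
    show ?thesis
    proof (intro exI[of _ "B powr (1/p)"] conjI allI impI)
      fix k :: nat assume k: "k \<ge> 1"
      have "u k powr (1/p) \<le> (B * real k powr (-(\<gamma> * p))) powr (1/p)"
        using B k u0 p by (intro powr_mono2) auto
      also have "\<dots> = B powr (1/p) * real k powr (-\<gamma>)"
        using B p by (simp add: powr_mult powr_powr)
      finally show "u k powr (1/p) \<le> B powr (1/p) * real k powr (-\<gamma>)" .
    qed simp
  next
    case False
    then have p2: "p > 2" by simp
    have Bpe: "Bp p b = (\<Sum>j. (b (Suc j))\<^sup>2) powr (p / 2)" using p2 by (simp add: Bp_def)
    obtain B where B: "B \<ge> 0" "\<forall>k\<ge>1. u k powr (2 / p) \<le> B * real k powr (-(\<gamma> * 2))"
      using final_gt2[OF p2 u0 K' c1 C0 c g2 bb] contr' recg p2 unfolding Bpe K'_def by auto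
    show ?thesis
    proof (intro exI[of _ "B powr (1/2)"] conjI allI impI)
      fix k :: nat assume k: "k \<ge> 1"
      have "u k powr (1/p) = (u k powr (2 / p)) powr (1/2)" using p by (simp add: powr_powr)
      also have "\<dots> \<le> (B * real k powr (-(\<gamma> * 2))) powr (1/2)"
        using B k by (intro powr_mono2) auto
      also have "\<dots> = B powr (1/2) * real k powr (-\<gamma>)"
        using B by (simp add: powr_mult powr_powr)
      finally show "u k powr (1/p) \<le> B powr (1/2) * real k powr (-\<gamma>)" .
    qed simp
  qed
  then obtain B where B: "\<forall>k\<ge>1. u k powr (1 / p) \<le> B * real k powr (-\<gamma>)" by blast
  show ?thesis
  proof (rule bigoI[of _ B])
    show "\<forall>\<^sub>F k in at_top. norm (u k powr (1 / p)) \<le> B * norm (real k powr (-\<gamma>))"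
      using B by (intro eventually_sequentiallyI[of 1]) auto
  qed
qed




definition Jn :: "nat \<Rightarrow> int option set" where
  "Jn n = {Some t | t. t < int n} \<union> (if n \<ge> 1 then {None} else {})"

lemma Jn_mono: "i \<le> j \<Longrightarrow> Jn i \<subseteq> Jn j"
  by (auto simp: Jn_def)

lemma Some_notin_Jn: "Some (int i) \<notin> Jn i" by (auto simp: Jn_def)

lemma Jn0_disj: "Jn 0 \<inter> {Some 0, None} = {}" by (auto simp: Jn_def)

lemma Jn_Some_iff: "Some t \<in> Jn n \<longleftrightarrow> t < int n" by (auto simp: Jn_def)
lemma Jn_None_iff: "None \<in> Jn n \<longleftrightarrow> n \<ge> 1" by (auto simp: Jn_def)

context iid begin

lemma coord_distr: "distr M \<mu> (\<lambda>\<omega>. \<omega> i) = \<mu>"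
  unfolding iid_space_def by (rule distr_PiM_component) (auto simp: prob_mu)

lemma coord_meas_mu: "(\<lambda>\<omega>. \<omega> i) \<in> measurable M \<mu>"
  unfolding iid_space_def by (rule measurable_component_singleton) simp

lemma coord_integrable:
  fixes f :: "real \<Rightarrow> real"
  assumes "f \<in> borel_measurable borel"
  shows "integrable M (\<lambda>\<omega>. f (\<omega> i)) \<longleftrightarrow> integrable \<mu> f"
proof -
  have fm: "f \<in> borel_measurable \<mu>" using assms by (simp add: measurable_cong_sets[OF sets_mu refl])
  show ?thesis using integrable_distr_eq[OF coord_meas_mu fm] by (simp add: coord_distr)
qed

lemma coord_integral:
  fixes f :: "real \<Rightarrow> real"
  assumes "f \<in> borel_measurable borel"
  shows "(\<integral>\<omega>. f (\<omega> i) \<partial>M) = (\<integral>x. f x \<partial>\<mu>)"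
proof -
  have fm: "f \<in> borel_measurable \<mu>" using assms by (simp add: measurable_cong_sets[OF sets_mu refl])
  show ?thesis using integral_distr[OF coord_meas_mu fm] by (simp add: coord_distr)
qed

lemma idx_meas_FJ:
  assumes idx: "\<And>j. idx j \<in> J" and g: "g \<in> borel_measurable (PiM UNIV (\<lambda>_::nat. borel))"
  shows "(\<lambda>\<omega>. g (\<lambda>j. \<omega> (idx j))) \<in> borel_measurable (FJ J)"
proof -
  have "(\<lambda>x j. x (idx j)) \<in> measurable (PiM J (\<lambda>_. borel)) (PiM UNIV (\<lambda>_::nat. borel))"
    by (rule measurable_PiM_single') (auto intro!: measurable_component_singleton idx)
  then have "(\<lambda>x. g (\<lambda>j. x (idx j))) \<in> borel_measurable (PiM J (\<lambda>_. borel))"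
    using g by measurable
  from FJ_comp[OF this] show ?thesis using idx by simp
qed

lemma powr_integrable_add:
  fixes f g :: "omega \<Rightarrow> real"
  assumes p: "p > 0" and m: "f \<in> borel_measurable M" "g \<in> borel_measurable M"
    and i: "integrable M (\<lambda>\<omega>. \<bar>f \<omega>\<bar> powr p)" "integrable M (\<lambda>\<omega>. \<bar>g \<omega>\<bar> powr p)"
  shows "integrable M (\<lambda>\<omega>. \<bar>f \<omega> + g \<omega>\<bar> powr p)"
proof (rule Bochner_Integration.integrable_bound)
  show "integrable M (\<lambda>\<omega>. 2 powr p * (\<bar>f \<omega>\<bar> powr p + \<bar>g \<omega>\<bar> powr p))" using i by auto
  show "AE x in M. norm (\<bar>f x + g x\<bar> powr p) \<le> norm (2 powr p * (\<bar>f x\<bar> powr p + \<bar>g x\<bar> powr p))"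
    using powr_abs_add_le[OF p] by auto
qed (use m in auto)

lemma powr_integrable_sum:
  fixes f :: "'i \<Rightarrow> omega \<Rightarrow> real"
  assumes p: "p > 0" and "finite I" and m: "\<And>i. i \<in> I \<Longrightarrow> f i \<in> borel_measurable M"
    and i: "\<And>i. i \<in> I \<Longrightarrow> integrable M (\<lambda>\<omega>. \<bar>f i \<omega>\<bar> powr p)"
  shows "integrable M (\<lambda>\<omega>. \<bar>\<Sum>i\<in>I. f i \<omega>\<bar> powr p)"
  using assms(2) m i
proof (induction I rule: finite_induct)
  case empty then show ?case using p by simp
next
  case (insert x F)
  have "integrable M (\<lambda>\<omega>. \<bar>f x \<omega> + (\<Sum>i\<in>F. f i \<omega>)\<bar> powr p)"
    by (rule powr_integrable_add[OF p]) (use insert in auto)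
  then show ?case using insert by simp
qed

lemma powr_integrable_cmult:
  fixes f :: "omega \<Rightarrow> real"
  assumes "integrable M (\<lambda>\<omega>. \<bar>f \<omega>\<bar> powr p)"
  shows "integrable M (\<lambda>\<omega>. \<bar>c * f \<omega>\<bar> powr p)"
proof -
  have "integrable M (\<lambda>\<omega>. \<bar>c\<bar> powr p * \<bar>f \<omega>\<bar> powr p)" using assms by auto
  then show ?thesis by (simp add: abs_mult powr_mult)
qed

lemma rosenthal_apply:
  fixes Y :: "nat \<Rightarrow> omega \<Rightarrow> real"
  assumes R: "rosenthal_const TYPE(omega) p K" and p: "p \<ge> 1"
    and Ym: "\<And>i. Y i \<in> borel_measurable (FJ (Jn (Suc i)))"
    and Yp: "\<And>i. integrable M (\<lambda>\<omega>. \<bar>Y i \<omega>\<bar> powr p)"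
    and Yc: "p > 1 \<Longrightarrow> (\<And>i. AE \<omega> in M. real_cond_exp M (FJ (Jn i)) (Y i) \<omega> = 0)"
  shows "if p \<le> 2 then
             (\<integral>x. \<bar>\<Sum>j<n. Y j x\<bar> powr p \<partial>M) \<le> K * (\<Sum>j<n. \<integral>x. \<bar>Y j x\<bar> powr p \<partial>M)
           else
             (\<integral>x. \<bar>\<Sum>j<n. Y j x\<bar> powr p \<partial>M)
               \<le> K * (\<Sum>j<n. (\<integral>x. \<bar>Y j x\<bar> powr p \<partial>M) powr (2 / p)) powr (p / 2)"
proof -
  have YM: "Y i \<in> borel_measurable M" for i using Ym FJ_meas_M by blast
  have mds: "is_mds M Y" if "p > 1"
    unfolding is_mds_def
  proof (intro exI[of _ "\<lambda>j. FJ (Jn j)"] conjI allI impI)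
    show "sigma_finite_subalgebra M (FJ (Jn j))" for j by (rule sfs_FJ)
    show "sets (FJ (Jn i)) \<subseteq> sets (FJ (Jn j))" if "i \<le> j" for i j
    proof
      fix A assume A: "A \<in> sets (FJ (Jn i))"
      have "(\<lambda>x. x) \<in> measurable (FJ (Jn j)) (FJ (Jn i))"
        unfolding FJ_def[of "Jn i"]
        by (rule measurable_vimage_algebra2) (use FJ_mono[OF Jn_mono[OF that] restrict_meas_FJ] in auto)
      from measurable_sets[OF this A] show "A \<in> sets (FJ (Jn j))" by simp
    qed
    show "Y j \<in> borel_measurable (FJ (Jn (Suc j)))" for j by (rule Ym)
    show "integrable M (Y j)" for j by (rule Lp_integrable[OF p YM Yp])
    show "AE x in M. real_cond_exp M (FJ (Jn j)) (Y j) x = 0" for j by (rule Yc[OF that])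
  qed
  show ?thesis
  proof -
    have H: "prob_space M \<longrightarrow> (p > 1 \<longrightarrow> is_mds M Y) \<longrightarrow> (\<forall>j. Y j \<in> borel_measurable M)
      \<longrightarrow> (\<forall>j. integrable M (\<lambda>x. \<bar>Y j x\<bar> powr p))
      \<longrightarrow> (if p \<le> 2 then
             (\<integral>x. \<bar>\<Sum>j<n. Y j x\<bar> powr p \<partial>M) \<le> K * (\<Sum>j<n. \<integral>x. \<bar>Y j x\<bar> powr p \<partial>M)
           else
             (\<integral>x. \<bar>\<Sum>j<n. Y j x\<bar> powr p \<partial>M)
               \<le> K * (\<Sum>j<n. (\<integral>x. \<bar>Y j x\<bar> powr p \<partial>M) powr (2 / p)) powr (p / 2))"
      using R unfolding rosenthal_const_def by blast
    show ?thesis using H prob_M mds YM Yp by blast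
  qed
qed

end



locale model = iid +
  fixes p a L K :: real and Q :: "real \<Rightarrow> real" and b :: "nat \<Rightarrow> real"
  assumes p1: "p \<ge> 1" and mom: "integrable \<mu> (\<lambda>x. \<bar>x\<bar> powr p)"
    and mean: "p > 1 \<longrightarrow> (\<integral>x. x \<partial>\<mu>) = 0"
    and L0: "L \<ge> 0" and Lip: "\<forall>x y. \<bar>Q x - Q y\<bar> \<le> L * \<bar>x - y\<bar>"
    and Ros: "rosenthal_const TYPE(omega) p K"
begin

definition "mup = (\<integral>x. \<bar>x\<bar> powr p \<partial>\<mu>)"

lemma pp: "p > 0" using p1 by simp

lemma Q_cont: "continuous_on UNIV Q"
proof (rule lipschitz_on_continuous_on)
  show "L-lipschitz_on UNIV Q"
    by (rule lipschitz_onI) (use Lip L0 in \<open>auto simp: dist_real_def\<close>)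
qed

lemma Q_meas[measurable]: "Q \<in> borel_measurable borel"
  using Q_cont by (rule borel_measurable_continuous_onI)

lemma mup_nonneg: "mup \<ge> 0" unfolding mup_def by simp

lemma zeta_p_int: "integrable M (\<lambda>\<omega>. \<bar>\<omega> i\<bar> powr p)"
  using coord_integrable[of "\<lambda>x. \<bar>x\<bar> powr p" i] mom by simp

lemma zeta_p_integral: "(\<integral>\<omega>. \<bar>\<omega> i\<bar> powr p \<partial>M) = mup"
  using coord_integral[of "\<lambda>x. \<bar>x\<bar> powr p" i] by (simp add: mup_def)

lemma zeta_int: "integrable M (\<lambda>\<omega>. \<omega> i)"
  by (rule Lp_integrable[OF p1 _ zeta_p_int]) simp

lemma zeta_mean: "p > 1 \<Longrightarrow> (\<integral>\<omega>. \<omega> i \<partial>M) = 0"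
  using coord_integral[of "\<lambda>x. x" i] mean by simp

lemma Q_diff_powr: "\<bar>Q (a + x) - Q (a + y)\<bar> powr p \<le> L powr p * \<bar>x - y\<bar> powr p"
proof -
  have "\<bar>Q (a + x) - Q (a + y)\<bar> powr p \<le> (L * \<bar>x - y\<bar>) powr p"
    using Lip[rule_format, of "a + x" "a + y"] pp by (intro powr_mono2) auto
  also have "\<dots> = L powr p * \<bar>x - y\<bar> powr p" using L0 by (simp add: powr_mult)
  finally show ?thesis .
qed

lemma Q_powr_integrable:
  fixes f :: "omega \<Rightarrow> real"
  assumes "f \<in> borel_measurable M" "integrable M (\<lambda>\<omega>. \<bar>f \<omega>\<bar> powr p)"
  shows "integrable M (\<lambda>\<omega>. \<bar>Q (a + f \<omega>)\<bar> powr p)"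
proof (rule Bochner_Integration.integrable_bound)
  show "integrable M (\<lambda>\<omega>. 2 powr p * (\<bar>Q a\<bar> powr p + L powr p * \<bar>f \<omega>\<bar> powr p))"
  proof -
    interpret prob_space M by (rule prob_M)
    show ?thesis using assms(2) by auto
  qed
  show "AE \<omega> in M. norm (\<bar>Q (a + f \<omega>)\<bar> powr p) \<le> norm (2 powr p * (\<bar>Q a\<bar> powr p + L powr p * \<bar>f \<omega>\<bar> powr p))"
  proof (intro AE_I2)
    fix \<omega>
    have "\<bar>Q (a + f \<omega>)\<bar> powr p = \<bar>Q a + (Q (a + f \<omega>) - Q (a + 0))\<bar> powr p" by simp
    also have "\<dots> \<le> 2 powr p * (\<bar>Q a\<bar> powr p + \<bar>Q (a + f \<omega>) - Q (a + 0)\<bar> powr p)"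
      by (rule powr_abs_add_le[OF pp])
    also have "\<dots> \<le> 2 powr p * (\<bar>Q a\<bar> powr p + L powr p * \<bar>f \<omega>\<bar> powr p)"
      using Q_diff_powr[of "f \<omega>" 0] by (intro mult_left_mono add_left_mono) auto
    finally show "norm (\<bar>Q (a + f \<omega>)\<bar> powr p) \<le> norm (2 powr p * (\<bar>Q a\<bar> powr p + L powr p * \<bar>f \<omega>\<bar> powr p))"
      by simp
  qed
qed (use assms in auto)

lemma Qdiff_powr_integrable:
  fixes f g :: "omega \<Rightarrow> real"
  assumes "f \<in> borel_measurable M" "g \<in> borel_measurable M" "integrable M (\<lambda>\<omega>. \<bar>f \<omega> - g \<omega>\<bar> powr p)"
  shows "integrable M (\<lambda>\<omega>. \<bar>Q (a + f \<omega>) - Q (a + g \<omega>)\<bar> powr p)"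
proof (rule Bochner_Integration.integrable_bound)
  show "integrable M (\<lambda>\<omega>. L powr p * \<bar>f \<omega> - g \<omega>\<bar> powr p)" using assms(3) by auto
  show "AE \<omega> in M. norm (\<bar>Q (a + f \<omega>) - Q (a + g \<omega>)\<bar> powr p) \<le> norm (L powr p * \<bar>f \<omega> - g \<omega>\<bar> powr p)"
    using Q_diff_powr by auto
qed (use assms in auto)

lemma Qdiff_powr_integral:
  fixes f g :: "omega \<Rightarrow> real"
  assumes "f \<in> borel_measurable M" "g \<in> borel_measurable M" "integrable M (\<lambda>\<omega>. \<bar>f \<omega> - g \<omega>\<bar> powr p)"
  shows "(\<integral>\<omega>. \<bar>Q (a + f \<omega>) - Q (a + g \<omega>)\<bar> powr p \<partial>M) \<le> L powr p * (\<integral>\<omega>. \<bar>f \<omega> - g \<omega>\<bar> powr p \<partial>M)"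
proof -
  have "(\<integral>\<omega>. \<bar>Q (a + f \<omega>) - Q (a + g \<omega>)\<bar> powr p \<partial>M) \<le> (\<integral>\<omega>. L powr p * \<bar>f \<omega> - g \<omega>\<bar> powr p \<partial>M)"
    by (rule integral_mono[OF Qdiff_powr_integrable[OF assms]]) (use assms Q_diff_powr in auto)
  then show ?thesis by simp
qed

lemma prod_powr_integrable:
  fixes u v :: "omega \<Rightarrow> real"
  assumes "J \<inter> J' = {}" "u \<in> borel_measurable (FJ J)" "v \<in> borel_measurable (FJ J')"
    "integrable M (\<lambda>\<omega>. \<bar>u \<omega>\<bar> powr p)" "integrable M (\<lambda>\<omega>. \<bar>v \<omega>\<bar> powr p)"
  shows "integrable M (\<lambda>\<omega>. \<bar>u \<omega> * v \<omega>\<bar> powr p)"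
    "(\<integral>\<omega>. \<bar>u \<omega> * v \<omega>\<bar> powr p \<partial>M) = (\<integral>\<omega>. \<bar>u \<omega>\<bar> powr p \<partial>M) * (\<integral>\<omega>. \<bar>v \<omega>\<bar> powr p \<partial>M)"
proof -
  have m1: "(\<lambda>\<omega>. \<bar>u \<omega>\<bar> powr p) \<in> borel_measurable (FJ J)" using assms(2) by measurable
  have m2: "(\<lambda>\<omega>. \<bar>v \<omega>\<bar> powr p) \<in> borel_measurable (FJ J')" using assms(3) by measurable
  have e: "\<bar>u \<omega> * v \<omega>\<bar> powr p = \<bar>u \<omega>\<bar> powr p * \<bar>v \<omega>\<bar> powr p" for \<omega> by (simp add: abs_mult powr_mult)
  show "integrable M (\<lambda>\<omega>. \<bar>u \<omega> * v \<omega>\<bar> powr p)" unfolding e by (rule indep_mult(1)[OF assms(1) m1 m2 assms(4,5)])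
  show "(\<integral>\<omega>. \<bar>u \<omega> * v \<omega>\<bar> powr p \<partial>M) = (\<integral>\<omega>. \<bar>u \<omega>\<bar> powr p \<partial>M) * (\<integral>\<omega>. \<bar>v \<omega>\<bar> powr p \<partial>M)"
    unfolding e by (rule indep_mult(2)[OF assms(1) m1 m2 assms(4,5)])
qed

end



context iid begin

lemma past_sig_neg: "s < 0 \<Longrightarrow> past (sig \<omega>) s = past \<omega> s"
  by (auto simp: past_def fun_eq_iff)

lemma past_meas_FJ:
  assumes "\<And>j. Some (s - int j) \<in> J" "g \<in> borel_measurable (PiM UNIV (\<lambda>_::nat. borel))"
  shows "(\<lambda>\<omega>. g (past \<omega> s)) \<in> borel_measurable (FJ J)"
  using idx_meas_FJ[of "\<lambda>j. Some (s - int j)" J g] assms by (simp add: past_def[abs_def])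

lemma past_sig_meas_FJ:
  assumes "\<And>j. swp (Some (s - int j)) \<in> J" "g \<in> borel_measurable (PiM UNIV (\<lambda>_::nat. borel))"
  shows "(\<lambda>\<omega>. g (past (sig \<omega>) s)) \<in> borel_measurable (FJ J)"
  using idx_meas_FJ[of "\<lambda>j. swp (Some (s - int j))" J g] assms by (simp add: past_def[abs_def] sig_def)

lemma swp_Some_in_Jn: "s < int n \<Longrightarrow> n \<ge> 1 \<Longrightarrow> swp (Some s) \<in> Jn n"
  by (auto simp: swp_def Jn_def)

end

context model begin

lemma X_part:
  fixes g :: "(nat \<Rightarrow> real) \<Rightarrow> real"
  assumes gm: "g \<in> borel_measurable (PiM UNIV (\<lambda>_::nat. borel))"
    and XS: "Xsol M p a b Q (\<lambda>t \<omega>. g (past \<omega> (t - 1)))"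
  defines "u \<equiv> \<lambda>k::nat. \<integral>\<omega>. \<bar>g (past \<omega> (int k - 1)) - g (past' \<omega> (int k - 1))\<bar> powr p \<partial>M"
  shows "\<exists>C0\<ge>0. \<forall>k\<ge>1.
    (p \<le> 2 \<longrightarrow> u k \<le> max K 0 * (\<bar>b k\<bar> powr p * C0 + (\<Sum>s\<in>{1..<k}. \<bar>b (k-s)\<bar> powr p * (mup * L powr p) * u s))) \<and>
    (p > 2 \<longrightarrow> u k \<le> max K 0 * ((\<bar>b k\<bar> powr p * C0) powr (2 / p)
              + (\<Sum>s\<in>{1..<k}. (\<bar>b (k-s)\<bar> powr p * (mup * L powr p) * u s) powr (2 / p))) powr (p / 2))"
proof -
  define X where "X t \<omega> = g (past \<omega> (t - 1))" for t \<omega>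
  have Xm: "X t \<in> borel_measurable M" for t using XS unfolding Xsol_def X_def by auto
  have Xp: "integrable M (\<lambda>\<omega>. \<bar>X t \<omega>\<bar> powr p)" for t using XS unfolding Xsol_def X_def by auto
  have Xlim: "(\<lambda>n. \<integral>\<^sup>+\<omega>. ennreal (\<bar>X t \<omega> -
           (\<Sum>j\<in>{1..n}. b j * \<omega> (Some (t - int j)) * Q (a + X (t - int j) \<omega>))\<bar> powr p) \<partial>M) \<longlonglongrightarrow> 0" for t
    using XS unfolding Xsol_def X_def by auto
  have X'm: "(\<lambda>\<omega>. X t (sig \<omega>)) \<in> borel_measurable M" for t using Xm by measurable
  have X'p: "integrable M (\<lambda>\<omega>. \<bar>X t (sig \<omega>)\<bar> powr p)" for t
    using integrable_sig[of "\<lambda>\<omega>. \<bar>X t \<omega>\<bar> powr p"] Xp Xm by auto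
  have dXp: "integrable M (\<lambda>\<omega>. \<bar>X t \<omega> - X t (sig \<omega>)\<bar> powr p)" for t
    using powr_integrable_add[OF pp Xm X'm[THEN borel_measurable_uminus], of t] Xp X'p by simp
  have X0sig: "X t (sig \<omega>) = X t \<omega>" if "t \<le> 0" for t \<omega>
    using past_sig_neg[of "t - 1" \<omega>] that by (simp add: X_def)
  have XFJ: "(\<lambda>\<omega>. X (int i) \<omega>) \<in> borel_measurable (FJ (Jn i))" for i
    unfolding X_def by (rule past_meas_FJ[OF _ gm]) (auto simp: Jn_def)
  have X'FJ: "(\<lambda>\<omega>. X (int i) (sig \<omega>)) \<in> borel_measurable (FJ (Jn i))" if "i \<ge> 1" for i
    unfolding X_def by (rule past_sig_meas_FJ[OF _ gm]) (use that in \<open>auto intro!: swp_Some_in_Jn\<close>)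
  have ueq: "u k = (\<integral>\<omega>. \<bar>X (int k) \<omega> - X (int k) (sig \<omega>)\<bar> powr p \<partial>M)" for k
    unfolding u_def X_def by (simp add: past'_sig)
  \<comment> \<open>the constant for the i = 0 term\<close>
  define C0 where "C0 = (\<integral>\<omega>. \<bar>Q (a + X 0 \<omega>)\<bar> powr p \<partial>M) * (\<integral>\<omega>. \<bar>\<omega> (Some 0) - \<omega> None\<bar> powr p \<partial>M)"
  have C0: "C0 \<ge> 0" unfolding C0_def by simp
  define c1 where "c1 = mup * L powr p"
  have main: "(p \<le> 2 \<longrightarrow> u k \<le> max K 0 * (\<bar>b k\<bar> powr p * C0 + (\<Sum>s\<in>{1..<k}. \<bar>b (k-s)\<bar> powr p * c1 * u s))) \<and>
    (p > 2 \<longrightarrow> u k \<le> max K 0 * ((\<bar>b k\<bar> powr p * C0) powr (2 / p)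
              + (\<Sum>s\<in>{1..<k}. (\<bar>b (k-s)\<bar> powr p * c1 * u s) powr (2 / p))) powr (p / 2))"
    if k: "k \<ge> 1" for k
  proof -
    define tm where "tm j \<omega> = b j * \<omega> (Some (int k - int j)) * Q (a + X (int k - int j) \<omega>)" for j \<omega>
    define S where "S n \<omega> = (\<Sum>j\<in>{1..n}. tm j \<omega>)" for n \<omega>
    define Y where "Y i \<omega> = (if i < k then tm (k - i) \<omega> - tm (k - i) (sig \<omega>) else 0)" for i \<omega>
    define D where "D \<omega> = (\<Sum>i<k. Y i \<omega>)" for \<omega>
    have tmm: "tm j \<in> borel_measurable M" for j unfolding tm_def using Xm by measurable
    have Sm: "S n \<in> borel_measurable M" for n unfolding S_def using tmm by measurable
    have S'm: "(\<lambda>\<omega>. S n (sig \<omega>)) \<in> borel_measurable M" for n using Sm by measurable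
    have Dm: "D \<in> borel_measurable M" unfolding D_def Y_def using tmm by measurable
    have tm_far: "tm j (sig \<omega>) = tm j \<omega>" if "j > k" for j \<omega>
      using that X0sig[of "int k - int j" \<omega>] by (simp add: tm_def)
    have SD: "S n \<omega> - S n (sig \<omega>) = D \<omega>" if "n \<ge> k" for n \<omega>
    proof -
      have "S n \<omega> - S n (sig \<omega>) = (\<Sum>j\<in>{1..n}. tm j \<omega> - tm j (sig \<omega>))"
        unfolding S_def by (simp add: sum_subtractf)
      also have "\<dots> = (\<Sum>j\<in>{1..k}. tm j \<omega> - tm j (sig \<omega>))"
        by (rule sum.mono_neutral_right) (use that tm_far in auto)
      also have "\<dots> = (\<Sum>i<k. tm (k - i) \<omega> - tm (k - i) (sig \<omega>))"
        by (rule sum.reindex_bij_witness[where i="\<lambda>i. k - i" and j="\<lambda>j. k - j"]) auto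
      also have "\<dots> = D \<omega>" unfolding D_def Y_def by simp
      finally show ?thesis .
    qed
    have limA: "(\<lambda>n. \<integral>\<^sup>+\<omega>. ennreal (\<bar>X (int k) \<omega> - S n \<omega>\<bar> powr p) \<partial>M) \<longlonglongrightarrow> 0"
      using Xlim[of "int k"] unfolding S_def tm_def by simp
    have limB: "(\<lambda>n. \<integral>\<^sup>+\<omega>. ennreal (\<bar>X (int k) (sig \<omega>) - S n (sig \<omega>)\<bar> powr p) \<partial>M) \<longlonglongrightarrow> 0"
    proof -
      have "(\<integral>\<^sup>+\<omega>. ennreal (\<bar>X (int k) (sig \<omega>) - S n (sig \<omega>)\<bar> powr p) \<partial>M)
          = (\<integral>\<^sup>+\<omega>. ennreal (\<bar>X (int k) \<omega> - S n \<omega>\<bar> powr p) \<partial>M)" for n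
        by (rule nn_integral_sig) (use Xm Sm in measurable)
      then show ?thesis using limA by simp
    qed
    have AED: "AE \<omega> in M. X (int k) \<omega> - X (int k) (sig \<omega>) = D \<omega>"
      by (rule Lp_limit_unique[OF pp Xm X'm Dm Sm S'm limA limB SD])
    have uD: "u k = (\<integral>\<omega>. \<bar>D \<omega>\<bar> powr p \<partial>M)"
      unfolding ueq by (rule integral_cong_AE) (use AED Xm X'm Dm in auto)
    define uY where "uY i \<omega> = (if i = 0 then b k * Q (a + X 0 \<omega>)
        else b (k - i) * (Q (a + X (int i) \<omega>) - Q (a + X (int i) (sig \<omega>))))" for i \<omega>
    define vY :: "nat \<Rightarrow> omega \<Rightarrow> real" where "vY i \<omega> = (if i = 0 then \<omega> (Some 0) - \<omega> None else \<omega> (Some (int i)))" for i \<omega>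
    define KY where "KY i = (if i = 0 then {Some 0, None} else {Some (int i)})" for i
    have Yuv: "Y i \<omega> = uY i \<omega> * vY i \<omega>" if "i < k" for i \<omega>
    proof (cases "i = 0")
      case True
      then show ?thesis using that k X0sig[of 0 \<omega>] by (simp add: Y_def uY_def vY_def tm_def algebra_simps)
    next
      case False
      then show ?thesis using that by (simp add: Y_def uY_def vY_def tm_def of_nat_diff algebra_simps)
    qed
    have Y0: "Y i = (\<lambda>_. 0)" if "\<not> i < k" for i using that by (simp add: Y_def fun_eq_iff)
    have uYm: "uY i \<in> borel_measurable (FJ (Jn i))" for i
    proof (cases "i = 0")
      case True
      have m: "(\<lambda>\<omega>. X 0 \<omega>) \<in> borel_measurable (FJ (Jn 0))" using XFJ[of 0] by simp
      have "uY i = (\<lambda>\<omega>. b k * Q (a + X 0 \<omega>))" using True by (simp add: uY_def fun_eq_iff)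
      then show ?thesis using True m by simp
    next
      case False
      have m1: "(\<lambda>\<omega>. X (int i) (sig \<omega>)) \<in> borel_measurable (FJ (Jn i))" using X'FJ[of i] False by simp
      have m2: "(\<lambda>\<omega>. X (int i) \<omega>) \<in> borel_measurable (FJ (Jn i))" using XFJ[of i] by simp
      have "uY i = (\<lambda>\<omega>. b (k - i) * (Q (a + X (int i) \<omega>) - Q (a + X (int i) (sig \<omega>))))"
        using False by (simp add: uY_def fun_eq_iff)
      then show ?thesis using m1 m2 by simp
    qed
    have vYm: "vY i \<in> borel_measurable (FJ (KY i))" for i
      unfolding vY_def KY_def by (cases "i = 0") auto
    have disj: "Jn i \<inter> KY i = {}" for i using Jn0_disj Some_notin_Jn[of i] by (auto simp: KY_def)
    have KYsub: "KY i \<subseteq> Jn (Suc i)" for i by (auto simp: KY_def Jn_def)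
    have uYp: "integrable M (\<lambda>\<omega>. \<bar>uY i \<omega>\<bar> powr p)" for i
    proof (cases "i = 0")
      case True
      then show ?thesis unfolding uY_def
        using powr_integrable_cmult[OF Q_powr_integrable[OF Xm Xp], of "b k" 0] by simp
    next
      case False
      then show ?thesis unfolding uY_def
        using powr_integrable_cmult[OF Qdiff_powr_integrable[OF Xm X'm dXp], of "b (k - i)" "int i"] by simp
    qed
    have vYp: "integrable M (\<lambda>\<omega>. \<bar>vY i \<omega>\<bar> powr p)" for i
    proof (cases "i = 0")
      case True
      have "integrable M (\<lambda>\<omega>. \<bar>\<omega> (Some 0) + - \<omega> None\<bar> powr p)"
        by (rule powr_integrable_add[OF pp]) (use zeta_p_int in auto)
      then show ?thesis using True unfolding vY_def by simp
    next
      case False then show ?thesis unfolding vY_def using zeta_p_int by simp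
    qed
    have Ym: "Y i \<in> borel_measurable (FJ (Jn (Suc i)))" for i
    proof (cases "i < k")
      case True
      have "uY i \<in> borel_measurable (FJ (Jn (Suc i)))" by (rule FJ_mono[OF Jn_mono uYm]) simp
      moreover have "vY i \<in> borel_measurable (FJ (Jn (Suc i)))" by (rule FJ_mono[OF KYsub vYm])
      ultimately have "(\<lambda>\<omega>. uY i \<omega> * vY i \<omega>) \<in> borel_measurable (FJ (Jn (Suc i)))" by measurable
      moreover have "Y i = (\<lambda>\<omega>. uY i \<omega> * vY i \<omega>)" using Yuv True by (simp add: fun_eq_iff)
      ultimately show ?thesis by simp
    next
      case False then show ?thesis using Y0 by simp
    qed
    have YM: "Y i \<in> borel_measurable M" for i using Ym FJ_meas_M by blast
    have Yp: "integrable M (\<lambda>\<omega>. \<bar>Y i \<omega>\<bar> powr p)" for i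
    proof (cases "i < k")
      case True
      then show ?thesis using prod_powr_integrable(1)[OF disj uYm vYm uYp vYp] Yuv by simp
    next
      case False then show ?thesis using Y0 by simp
    qed
    have EY: "(\<integral>\<omega>. \<bar>Y i \<omega>\<bar> powr p \<partial>M) = (\<integral>\<omega>. \<bar>uY i \<omega>\<bar> powr p \<partial>M) * (\<integral>\<omega>. \<bar>vY i \<omega>\<bar> powr p \<partial>M)"
      if "i < k" for i
      using prod_powr_integrable(2)[OF disj uYm vYm uYp vYp] Yuv that by simp
    have EY0: "(\<integral>\<omega>. \<bar>Y 0 \<omega>\<bar> powr p \<partial>M) = \<bar>b k\<bar> powr p * C0"
      using EY[of 0] k unfolding uY_def vY_def C0_def by (simp add: abs_mult powr_mult)
    have EYi: "(\<integral>\<omega>. \<bar>Y i \<omega>\<bar> powr p \<partial>M) \<le> \<bar>b (k - i)\<bar> powr p * c1 * u i" if "1 \<le> i" "i < k" for i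
    proof -
      have "(\<integral>\<omega>. \<bar>uY i \<omega>\<bar> powr p \<partial>M)
          = \<bar>b (k - i)\<bar> powr p * (\<integral>\<omega>. \<bar>Q (a + X (int i) \<omega>) - Q (a + X (int i) (sig \<omega>))\<bar> powr p \<partial>M)"
        using that unfolding uY_def by (simp add: abs_mult powr_mult)
      also have "\<dots> \<le> \<bar>b (k - i)\<bar> powr p * (L powr p * u i)"
        unfolding ueq by (intro mult_left_mono Qdiff_powr_integral[OF Xm X'm dXp]) auto
      finally have "(\<integral>\<omega>. \<bar>uY i \<omega>\<bar> powr p \<partial>M) \<le> \<bar>b (k - i)\<bar> powr p * (L powr p * u i)" .
      moreover have "(\<integral>\<omega>. \<bar>vY i \<omega>\<bar> powr p \<partial>M) = mup" using that unfolding vY_def by (simp add: zeta_p_integral)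
      ultimately have "(\<integral>\<omega>. \<bar>Y i \<omega>\<bar> powr p \<partial>M) \<le> (\<bar>b (k - i)\<bar> powr p * (L powr p * u i)) * mup"
        using EY[OF that(2)] mup_nonneg by (simp add: mult_right_mono)
      also have "\<dots> = \<bar>b (k - i)\<bar> powr p * c1 * u i" by (simp add: c1_def mult_ac)
      finally show ?thesis .
    qed
    have Yc: "AE \<omega> in M. real_cond_exp M (FJ (Jn i)) (Y i) \<omega> = 0" if p1': "p > 1" for i
    proof (cases "i < k")
      case True
      show ?thesis
      proof (rule cond_exp_zero[OF disj uYm vYm])
        show "integrable M (uY i)" by (rule Lp_integrable[OF p1 _ uYp]) (use uYm FJ_meas_M in blast)
        show "integrable M (vY i)" by (rule Lp_integrable[OF p1 _ vYp]) (use vYm FJ_meas_M in blast)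
        show "(\<integral>\<omega>. vY i \<omega> \<partial>M) = 0"
        proof (cases "i = 0")
          case True
          have "(\<integral>\<omega>. \<omega> (Some 0) - \<omega> None \<partial>M) = (\<integral>\<omega>. \<omega> (Some 0) \<partial>M) - (\<integral>\<omega>. \<omega> None \<partial>M)"
            by (rule Bochner_Integration.integral_diff) (rule zeta_int)+
          then show ?thesis using True zeta_mean[OF p1'] unfolding vY_def by simp
        next
          case False then show ?thesis using zeta_mean[OF p1'] unfolding vY_def by simp
        qed
        show "Y i \<in> borel_measurable M" by (rule YM)
        show "integrable M (Y i)" by (rule Lp_integrable[OF p1 YM Yp])
        show "AE \<omega> in M. Y i \<omega> = uY i \<omega> * vY i \<omega>" using Yuv True by simp
      qed
    next
      case False
      show ?thesis
      proof (rule cond_exp_zero[of "Jn i" "{}" "\<lambda>_. 0" "\<lambda>_. 0"])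
        show "AE \<omega> in M. Y i \<omega> = 0 * 0" using Y0 False by simp
      qed (use Y0 False in auto)
    qed
    note RI = rosenthal_apply[OF Ros p1 Ym Yp Yc, of k]
    have uD': "(\<integral>\<omega>. \<bar>\<Sum>j<k. Y j \<omega>\<bar> powr p \<partial>M) = u k" unfolding uD D_def ..
    define e where "e j = (\<integral>\<omega>. \<bar>Y j \<omega>\<bar> powr p \<partial>M)" for j
    have e0: "e j \<ge> 0" for j unfolding e_def by simp
    have ins: "{..<k} = insert 0 {1..<k}" using k by auto
    have sumsplit: "(\<Sum>j<k. f j) = f 0 + (\<Sum>j\<in>{1..<k}. f j)" for f :: "nat \<Rightarrow> real"
      unfolding ins by (subst sum.insert) auto
    have ebound: "e j \<le> \<bar>b (k - j)\<bar> powr p * c1 * u j" if "j \<in> {1..<k}" for j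
      using EYi that unfolding e_def by auto
    have e0eq: "e 0 = \<bar>b k\<bar> powr p * C0" unfolding e_def by (rule EY0)
    have Kmax: "K * x \<le> max K 0 * x" if "x \<ge> 0" for x using that by (simp add: mult_right_mono)
    show ?thesis
    proof (intro conjI impI)
      assume p2: "p \<le> 2"
      have "u k \<le> K * (\<Sum>j<k. e j)" using RI p2 uD' unfolding e_def by simp
      also have "\<dots> \<le> max K 0 * (\<Sum>j<k. e j)" by (rule Kmax) (simp add: sum_nonneg e0)
      also have "(\<Sum>j<k. e j) \<le> \<bar>b k\<bar> powr p * C0 + (\<Sum>s\<in>{1..<k}. \<bar>b (k-s)\<bar> powr p * c1 * u s)"
        unfolding sumsplit e0eq by (intro add_left_mono sum_mono ebound)
      finally show "u k \<le> max K 0 * (\<bar>b k\<bar> powr p * C0 + (\<Sum>s\<in>{1..<k}. \<bar>b (k-s)\<bar> powr p * c1 * u s))"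
        by (simp add: mult_left_mono)
    next
      assume p2: "p > 2"
      have "u k \<le> K * (\<Sum>j<k. e j powr (2 / p)) powr (p / 2)" using RI p2 uD' unfolding e_def by simp
      also have "\<dots> \<le> max K 0 * (\<Sum>j<k. e j powr (2 / p)) powr (p / 2)" by (rule Kmax) simp
      also have "(\<Sum>j<k. e j powr (2 / p)) powr (p / 2) \<le> ((\<bar>b k\<bar> powr p * C0) powr (2 / p)
              + (\<Sum>s\<in>{1..<k}. (\<bar>b (k-s)\<bar> powr p * c1 * u s) powr (2 / p))) powr (p / 2)"
      proof (rule powr_mono2)
        show "(\<Sum>j<k. e j powr (2 / p)) \<le> (\<bar>b k\<bar> powr p * C0) powr (2 / p)
              + (\<Sum>s\<in>{1..<k}. (\<bar>b (k-s)\<bar> powr p * c1 * u s) powr (2 / p))"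
          unfolding sumsplit e0eq
          by (intro add_left_mono sum_mono powr_mono2) (use p2 e0 ebound in auto)
      qed (use p2 in \<open>auto intro: sum_nonneg\<close>)
      finally show "u k \<le> max K 0 * ((\<bar>b k\<bar> powr p * C0) powr (2 / p)
              + (\<Sum>s\<in>{1..<k}. (\<bar>b (k-s)\<bar> powr p * c1 * u s) powr (2 / p))) powr (p / 2)"
        by (simp add: mult_left_mono)
    qed
  qed
  show ?thesis using main C0 unfolding c1_def by blast
qed

end



context model begin

lemma Q_integrable:
  fixes f :: "omega \<Rightarrow> real"
  assumes "f \<in> borel_measurable M" "integrable M f"
  shows "integrable M (\<lambda>\<omega>. Q (a + f \<omega>))"
proof (rule Bochner_Integration.integrable_bound)
  show "integrable M (\<lambda>\<omega>. \<bar>Q a\<bar> + L * \<bar>f \<omega>\<bar>)"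
  proof -
    interpret prob_space M by (rule prob_M)
    show ?thesis using assms(2) by auto
  qed
  show "AE \<omega> in M. norm (Q (a + f \<omega>)) \<le> norm (\<bar>Q a\<bar> + L * \<bar>f \<omega>\<bar>)"
  proof (intro AE_I2)
    fix \<omega>
    have "\<bar>Q (a + f \<omega>) - Q a\<bar> \<le> L * \<bar>f \<omega>\<bar>" using Lip[rule_format, of "a + f \<omega>" a] by simp
    then show "norm (Q (a + f \<omega>)) \<le> norm (\<bar>Q a\<bar> + L * \<bar>f \<omega>\<bar>)" using L0 by auto
  qed
qed (use assms in auto)

lemma R_part:
  fixes h :: "(nat \<Rightarrow> real) \<Rightarrow> real"
  assumes hm: "h \<in> borel_measurable (PiM UNIV (\<lambda>_::nat. borel))"
    and RS: "rsol M p a b Q (\<lambda>t \<omega>. h (past \<omega> t))"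
  defines "u \<equiv> \<lambda>k::nat. \<integral>\<omega>. \<bar>h (past \<omega> (int k)) - h (past' \<omega> (int k))\<bar> powr p \<partial>M"
  shows "\<exists>C0\<ge>0. \<forall>k\<ge>1.
    (p \<le> 2 \<longrightarrow> u k \<le> max K 0 * (\<bar>b k\<bar> powr p * C0 + (\<Sum>s\<in>{1..<k}. \<bar>b (k-s)\<bar> powr p * (mup * L powr p) * u s))) \<and>
    (p > 2 \<longrightarrow> u k \<le> max K 0 * ((\<bar>b k\<bar> powr p * C0) powr (2 / p)
              + (\<Sum>s\<in>{1..<k}. (\<bar>b (k-s)\<bar> powr p * (mup * L powr p) * u s) powr (2 / p))) powr (p / 2))"
proof -
  define r where "r t \<omega> = h (past \<omega> t)" for t \<omega>
  have rm: "r t \<in> borel_measurable M" for t using RS unfolding rsol_def r_def by auto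
  have rp: "integrable M (\<lambda>\<omega>. \<bar>r t \<omega>\<bar> powr p)" for t using RS unfolding rsol_def r_def by auto
  have "\<forall>t. \<exists>Y \<in> borel_measurable M.
          ((\<lambda>n. \<integral>\<^sup>+\<omega>. ennreal (\<bar>Y \<omega> - (\<Sum>j\<in>{1..n}. b j * r (t - int j) \<omega>)\<bar> powr p) \<partial>M) \<longlonglongrightarrow> 0)
          \<and> (AE \<omega> in M. r t \<omega> = \<omega> (Some t) * Q (a + Y \<omega>))"
    using RS unfolding rsol_def r_def by auto
  then have "\<forall>t. \<exists>Y. Y \<in> borel_measurable M \<and>
          ((\<lambda>n. \<integral>\<^sup>+\<omega>. ennreal (\<bar>Y \<omega> - (\<Sum>j\<in>{1..n}. b j * r (t - int j) \<omega>)\<bar> powr p) \<partial>M) \<longlonglongrightarrow> 0)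
          \<and> (AE \<omega> in M. r t \<omega> = \<omega> (Some t) * Q (a + Y \<omega>))" by (simp add: Bex_def)
  from choice[OF this] obtain Yr where Yrm: "\<And>t. Yr t \<in> borel_measurable M"
    and Yrlim: "\<And>t. (\<lambda>n. \<integral>\<^sup>+\<omega>. ennreal (\<bar>Yr t \<omega> - (\<Sum>j\<in>{1..n}. b j * r (t - int j) \<omega>)\<bar> powr p) \<partial>M) \<longlonglongrightarrow> 0"
    and Yreq: "\<And>t. AE \<omega> in M. r t \<omega> = \<omega> (Some t) * Q (a + Yr t \<omega>)"
    by blast
  define Sr where "Sr t n \<omega> = (\<Sum>j\<in>{1..n}. b j * r (t - int j) \<omega>)" for t n \<omega>
  have Srm: "Sr t n \<in> borel_measurable M" for t n unfolding Sr_def using rm by measurable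
  have Sr'm: "(\<lambda>\<omega>. Sr t n (sig \<omega>)) \<in> borel_measurable M" for t n using Srm by measurable
  have r'm: "(\<lambda>\<omega>. r t (sig \<omega>)) \<in> borel_measurable M" for t using rm by measurable
  have r'p: "integrable M (\<lambda>\<omega>. \<bar>r t (sig \<omega>)\<bar> powr p)" for t
    using integrable_sig[of "\<lambda>\<omega>. \<bar>r t \<omega>\<bar> powr p"] rp rm by auto
  have Srp: "integrable M (\<lambda>\<omega>. \<bar>Sr t n \<omega>\<bar> powr p)" for t n
    unfolding Sr_def
    by (rule powr_integrable_sum[OF pp]) (use rm powr_integrable_cmult[OF rp] in auto)
  have Sr'p: "integrable M (\<lambda>\<omega>. \<bar>Sr t n (sig \<omega>)\<bar> powr p)" for t n
    using integrable_sig[of "\<lambda>\<omega>. \<bar>Sr t n \<omega>\<bar> powr p"] Srp Srm by auto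
  have Yr'lim: "(\<lambda>n. \<integral>\<^sup>+\<omega>. ennreal (\<bar>Yr t (sig \<omega>) - Sr t n (sig \<omega>)\<bar> powr p) \<partial>M) \<longlonglongrightarrow> 0" for t
  proof -
    have "(\<integral>\<^sup>+\<omega>. ennreal (\<bar>Yr t (sig \<omega>) - Sr t n (sig \<omega>)\<bar> powr p) \<partial>M)
        = (\<integral>\<^sup>+\<omega>. ennreal (\<bar>Yr t \<omega> - Sr t n \<omega>\<bar> powr p) \<partial>M)" for n
      by (rule nn_integral_sig) (use Yrm Srm in measurable)
    then show ?thesis using Yrlim[of t] unfolding Sr_def by simp
  qed
  have Yrlim': "(\<lambda>n. \<integral>\<^sup>+\<omega>. ennreal (\<bar>Yr t \<omega> - Sr t n \<omega>\<bar> powr p) \<partial>M) \<longlonglongrightarrow> 0" for t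
    using Yrlim[of t] unfolding Sr_def .
  have rFJ: "r (int i - int j) \<in> borel_measurable (FJ (Jn i))" if "j \<ge> 1" for i j
    unfolding r_def by (rule past_meas_FJ[OF _ hm]) (use that in \<open>auto simp: Jn_def\<close>)
  have r'FJ: "(\<lambda>\<omega>. r (int i - int j) (sig \<omega>)) \<in> borel_measurable (FJ (Jn i))" if "i \<ge> 1" "j \<ge> 1" for i j
    unfolding r_def by (rule past_sig_meas_FJ[OF _ hm]) (use that in \<open>auto intro!: swp_Some_in_Jn\<close>)
  have SrFJ: "Sr (int i) n \<in> borel_measurable (FJ (Jn i))" for i n
  proof -
    have "(\<lambda>\<omega>. \<Sum>j\<in>{1..n}. b j * r (int i - int j) \<omega>) \<in> borel_measurable (FJ (Jn i))"
      by (rule borel_measurable_sum) (use rFJ in auto)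
    then show ?thesis unfolding Sr_def by (simp add: fun_eq_iff)
  qed
  have Sr'FJ: "(\<lambda>\<omega>. Sr (int i) n (sig \<omega>)) \<in> borel_measurable (FJ (Jn i))" if "i \<ge> 1" for i n
  proof -
    have "(\<lambda>\<omega>. \<Sum>j\<in>{1..n}. b j * r (int i - int j) (sig \<omega>)) \<in> borel_measurable (FJ (Jn i))"
      by (rule borel_measurable_sum) (use r'FJ[OF that] in auto)
    then show ?thesis unfolding Sr_def by (simp add: fun_eq_iff)
  qed
  have Vhat: "\<exists>Z\<in>borel_measurable (FJ (Jn i)). AE \<omega> in M. Yr (int i) \<omega> = Z \<omega>" for i
    by (rule Lp_limit_FJ_version[OF p1 Yrm SrFJ Srp Yrlim'])
  have Vhat': "\<exists>Z\<in>borel_measurable (FJ (Jn i)). AE \<omega> in M. Yr (int i) (sig \<omega>) = Z \<omega>" if "i \<ge> 1" for i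
    by (rule Lp_limit_FJ_version[OF p1 _ Sr'FJ[OF that] Sr'p Yr'lim]) (use Yrm in measurable)
  have Yrint: "integrable M (Yr t)" for t
    by (rule Lp_integrable[OF p1 Yrm Lp_limit_integrable[OF p1 Yrm Srm Srp Yrlim']])
  define Dr where "Dr k \<omega> = (\<Sum>j\<in>{1..k}. b j * (r (int k - int j) \<omega> - r (int k - int j) (sig \<omega>)))" for k \<omega>
  have Drm: "Dr k \<in> borel_measurable M" for k unfolding Dr_def using rm by measurable
  have r_far: "r t (sig \<omega>) = r t \<omega>" if "t < 0" for t \<omega>
    using past_sig_neg[OF that] by (simp add: r_def)
  have SrD: "Sr (int k) n \<omega> - Sr (int k) n (sig \<omega>) = Dr k \<omega>" if "n \<ge> k" for k n \<omega>
  proof -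
    have "Sr (int k) n \<omega> - Sr (int k) n (sig \<omega>) = (\<Sum>j\<in>{1..n}. b j * (r (int k - int j) \<omega> - r (int k - int j) (sig \<omega>)))"
      unfolding Sr_def by (simp add: sum_subtractf right_diff_distrib)
    also have "\<dots> = Dr k \<omega>" unfolding Dr_def
      by (rule sum.mono_neutral_right) (use that r_far in auto)
    finally show ?thesis .
  qed
  have AEDr: "AE \<omega> in M. Yr (int k) \<omega> - Yr (int k) (sig \<omega>) = Dr k \<omega>" for k
    by (rule Lp_limit_unique[OF pp Yrm _ Drm Srm Sr'm Yrlim' Yr'lim SrD]) (use Yrm in measurable)
  define dr where "dr i \<omega> = r (int i) \<omega> - r (int i) (sig \<omega>)" for i \<omega>
  have drm: "dr i \<in> borel_measurable M" for i unfolding dr_def using rm by measurable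
  have drp: "integrable M (\<lambda>\<omega>. \<bar>dr i \<omega>\<bar> powr p)" for i
    using powr_integrable_add[OF pp rm r'm[THEN borel_measurable_uminus], of "int i" "int i"] rp r'p
    by (simp add: dr_def)
  have ueq: "u i = (\<integral>\<omega>. \<bar>dr i \<omega>\<bar> powr p \<partial>M)" for i
    unfolding u_def dr_def r_def by (simp add: past'_sig)
  have A0: "\<exists>Z\<in>borel_measurable (FJ (Jn 0)). integrable M Z \<and>
      (AE \<omega> in M. dr 0 \<omega> = Q (a + Z \<omega>) * (\<omega> (Some 0) - \<omega> None))"
  proof -
    obtain Z where Z: "Z \<in> borel_measurable (FJ (Jn 0))" "AE \<omega> in M. Yr 0 \<omega> = Z \<omega>" using Vhat[of 0] by auto
    have ZM: "Z \<in> borel_measurable M" using Z(1) FJ_meas_M by blast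
    have "integrable M Z" using Yrint[of 0] Z(2) ZM Yrm[of 0] by (subst integrable_cong_AE[symmetric]) auto
    moreover have "AE \<omega> in M. dr 0 \<omega> = Q (a + Z \<omega>) * (\<omega> (Some 0) - \<omega> None)"
    proof -
      have e1: "AE \<omega> in M. r 0 \<omega> = \<omega> (Some 0) * Q (a + Yr 0 \<omega>)" using Yreq[of 0] by simp
      have e2: "AE \<omega> in M. r 0 (sig \<omega>) = \<omega> None * Q (a + Yr 0 (sig \<omega>))"
        using AE_sig[OF Yreq[of 0]] by simp
      have e3: "AE \<omega> in M. Yr 0 \<omega> - Yr 0 (sig \<omega>) = 0" using AEDr[of 0] by (simp add: Dr_def)
      from e1 e2 e3 Z(2) show ?thesis by eventually_elim (simp add: dr_def algebra_simps)
    qed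
    ultimately show ?thesis using Z(1) by blast
  qed
  have Ai: "\<exists>Z\<in>borel_measurable (FJ (Jn i)). \<exists>Z'\<in>borel_measurable (FJ (Jn i)).
      integrable M Z \<and> integrable M Z' \<and>
      (AE \<omega> in M. dr i \<omega> = (Q (a + Z \<omega>) - Q (a + Z' \<omega>)) * \<omega> (Some (int i))) \<and>
      (AE \<omega> in M. Z \<omega> - Z' \<omega> = Dr i \<omega>)" if i1: "i \<ge> 1" for i
  proof -
    obtain Z where Z: "Z \<in> borel_measurable (FJ (Jn i))" "AE \<omega> in M. Yr (int i) \<omega> = Z \<omega>" using Vhat[of i] by auto
    obtain Z' where Z': "Z' \<in> borel_measurable (FJ (Jn i))" "AE \<omega> in M. Yr (int i) (sig \<omega>) = Z' \<omega>"
      using Vhat'[OF i1] by auto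
    have ZM: "Z \<in> borel_measurable M" using Z(1) FJ_meas_M by blast
    have Z'M: "Z' \<in> borel_measurable M" using Z'(1) FJ_meas_M by blast
    have Yr'm: "(\<lambda>\<omega>. Yr (int i) (sig \<omega>)) \<in> borel_measurable M" using Yrm by measurable
    have "integrable M Z" using Yrint[of "int i"] Z(2) ZM Yrm[of "int i"] by (subst integrable_cong_AE[symmetric]) auto
    moreover have "integrable M Z'"
    proof -
      have "integrable M (\<lambda>\<omega>. Yr (int i) (sig \<omega>))" using integrable_sig[OF Yrm] Yrint by auto
      then show ?thesis using Z'(2) Z'M Yr'm by (subst integrable_cong_AE[symmetric]) auto
    qed
    moreover have "AE \<omega> in M. dr i \<omega> = (Q (a + Z \<omega>) - Q (a + Z' \<omega>)) * \<omega> (Some (int i))"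
    proof -
      have e1: "AE \<omega> in M. r (int i) \<omega> = \<omega> (Some (int i)) * Q (a + Yr (int i) \<omega>)" using Yreq[of "int i"] by simp
      have e2: "AE \<omega> in M. r (int i) (sig \<omega>) = \<omega> (Some (int i)) * Q (a + Yr (int i) (sig \<omega>))"
        using AE_sig[OF Yreq[of "int i"]] i1 by simp
      from e1 e2 Z(2) Z'(2) show ?thesis by eventually_elim (simp add: dr_def algebra_simps)
    qed
    moreover have "AE \<omega> in M. Z \<omega> - Z' \<omega> = Dr i \<omega>"
      using AEDr[of i] Z(2) Z'(2) by eventually_elim simp
    ultimately show ?thesis using Z(1) Z'(1) by blast
  qed
  define c1 where "c1 = mup * L powr p"
  have c1: "c1 \<ge> 0" unfolding c1_def using mup_nonneg by simp
  define C0 where "C0 = c1 * u 0"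
  have u0: "u i \<ge> 0" for i unfolding ueq by simp
  have C0: "C0 \<ge> 0" unfolding C0_def using c1 u0 by simp
  have Drp: "integrable M (\<lambda>\<omega>. \<bar>Dr k \<omega>\<bar> powr p)" for k
    unfolding Dr_def
  proof (rule powr_integrable_sum[OF pp])
    fix j
    have "integrable M (\<lambda>\<omega>. \<bar>r (int k - int j) \<omega> + - r (int k - int j) (sig \<omega>)\<bar> powr p)"
      by (rule powr_integrable_add[OF pp]) (use rm r'm rp r'p in auto)
    then show "integrable M (\<lambda>\<omega>. \<bar>b j * (r (int k - int j) \<omega> - r (int k - int j) (sig \<omega>))\<bar> powr p)"
      using powr_integrable_cmult by simp
  qed (use rm r'm in auto)
  have main: "(p \<le> 2 \<longrightarrow> u k \<le> max K 0 * (\<bar>b k\<bar> powr p * C0 + (\<Sum>s\<in>{1..<k}. \<bar>b (k-s)\<bar> powr p * c1 * u s))) \<and>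
    (p > 2 \<longrightarrow> u k \<le> max K 0 * ((\<bar>b k\<bar> powr p * C0) powr (2 / p)
              + (\<Sum>s\<in>{1..<k}. (\<bar>b (k-s)\<bar> powr p * c1 * u s) powr (2 / p))) powr (p / 2))"
    if k: "k \<ge> 1" for k
  proof -
    have B1: "u k \<le> c1 * (\<integral>\<omega>. \<bar>Dr k \<omega>\<bar> powr p \<partial>M)"
    proof -
      obtain Z Z' where Z: "Z \<in> borel_measurable (FJ (Jn k))" "Z' \<in> borel_measurable (FJ (Jn k))"
        "AE \<omega> in M. dr k \<omega> = (Q (a + Z \<omega>) - Q (a + Z' \<omega>)) * \<omega> (Some (int k))"
        "AE \<omega> in M. Z \<omega> - Z' \<omega> = Dr k \<omega>"
        using Ai[OF k] by blast
      have ZM: "Z \<in> borel_measurable M" "Z' \<in> borel_measurable M" using Z(1,2) FJ_meas_M by blast+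
      have ZZp: "integrable M (\<lambda>\<omega>. \<bar>Z \<omega> - Z' \<omega>\<bar> powr p)"
        using Drp[of k] Z(4) ZM Drm by (subst integrable_cong_AE) auto
      have ZZi: "(\<integral>\<omega>. \<bar>Z \<omega> - Z' \<omega>\<bar> powr p \<partial>M) = (\<integral>\<omega>. \<bar>Dr k \<omega>\<bar> powr p \<partial>M)"
        by (rule integral_cong_AE) (use Z(4) ZM Drm in auto)
      have dQm: "(\<lambda>\<omega>. Q (a + Z \<omega>) - Q (a + Z' \<omega>)) \<in> borel_measurable (FJ (Jn k))" using Z(1,2) by measurable
      have zm: "(\<lambda>\<omega>. \<omega> (Some (int k))) \<in> borel_measurable (FJ {Some (int k)})" by simp
      have disj: "Jn k \<inter> {Some (int k)} = {}" using Some_notin_Jn by auto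
      note PP = prod_powr_integrable[OF disj dQm zm Qdiff_powr_integrable[OF ZM ZZp] zeta_p_int]
      have "u k = (\<integral>\<omega>. \<bar>(Q (a + Z \<omega>) - Q (a + Z' \<omega>)) * \<omega> (Some (int k))\<bar> powr p \<partial>M)"
        unfolding ueq by (rule integral_cong_AE) (use Z(3) drm ZM in auto)
      also have "\<dots> = (\<integral>\<omega>. \<bar>Q (a + Z \<omega>) - Q (a + Z' \<omega>)\<bar> powr p \<partial>M) * mup"
        using PP(2) zeta_p_integral by simp
      also have "\<dots> \<le> (L powr p * (\<integral>\<omega>. \<bar>Z \<omega> - Z' \<omega>\<bar> powr p \<partial>M)) * mup"
        by (intro mult_right_mono Qdiff_powr_integral[OF ZM ZZp] mup_nonneg)
      also have "\<dots> = c1 * (\<integral>\<omega>. \<bar>Dr k \<omega>\<bar> powr p \<partial>M)" unfolding ZZi c1_def by (simp add: mult_ac)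
      finally show ?thesis .
    qed
    define Zs where "Zs i \<omega> = (if i < k then b (k - i) * dr i \<omega> else 0)" for i \<omega>
    have Z0: "Zs i = (\<lambda>_. 0)" if "\<not> i < k" for i using that by (simp add: Zs_def fun_eq_iff)
    have drFJ: "dr i \<in> borel_measurable (FJ (Jn (Suc i)))" for i
    proof -
      have "r (int i) \<in> borel_measurable (FJ (Jn (Suc i)))"
        unfolding r_def by (rule past_meas_FJ[OF _ hm]) (auto simp: Jn_def)
      moreover have "(\<lambda>\<omega>. r (int i) (sig \<omega>)) \<in> borel_measurable (FJ (Jn (Suc i)))"
        unfolding r_def by (rule past_sig_meas_FJ[OF _ hm]) (auto intro!: swp_Some_in_Jn)
      ultimately show ?thesis unfolding dr_def by measurable
    qed
    have Ym: "Zs i \<in> borel_measurable (FJ (Jn (Suc i)))" for i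
      unfolding Zs_def using drFJ[of i] by measurable
    have YM: "Zs i \<in> borel_measurable M" for i using Ym FJ_meas_M by blast
    have Yp: "integrable M (\<lambda>\<omega>. \<bar>Zs i \<omega>\<bar> powr p)" for i
      by (cases "i < k") (use powr_integrable_cmult[OF drp] Z0 in \<open>auto simp: Zs_def\<close>)
    have EZ: "(\<integral>\<omega>. \<bar>Zs i \<omega>\<bar> powr p \<partial>M) = \<bar>b (k - i)\<bar> powr p * u i" if "i < k" for i
      using that unfolding Zs_def ueq by (simp add: abs_mult powr_mult)
    have Yc: "AE \<omega> in M. real_cond_exp M (FJ (Jn i)) (Zs i) \<omega> = 0" if p1': "p > 1" for i
    proof (cases "i < k")
      case False
      show ?thesis
      proof (rule cond_exp_zero[of "Jn i" "{}" "\<lambda>_. 0" "\<lambda>_. 0"])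
        show "AE \<omega> in M. Zs i \<omega> = 0 * 0" using Z0 False by simp
      qed (use Z0 False in auto)
    next
      case True
      show ?thesis
      proof (cases "i = 0")
        case True
        obtain Z where Z: "Z \<in> borel_measurable (FJ (Jn 0))" "integrable M Z"
          "AE \<omega> in M. dr 0 \<omega> = Q (a + Z \<omega>) * (\<omega> (Some 0) - \<omega> None)" using A0 by blast
        have ZM: "Z \<in> borel_measurable M" using Z(1) FJ_meas_M by blast
        show ?thesis unfolding \<open>i = 0\<close>
        proof (rule cond_exp_zero[of "Jn 0" "{Some 0, None}" "\<lambda>\<omega>. b k * Q (a + Z \<omega>)" "\<lambda>\<omega>. \<omega> (Some 0) - \<omega> None"])
          show "(\<lambda>\<omega>. b k * Q (a + Z \<omega>)) \<in> borel_measurable (FJ (Jn 0))" using Z(1) by measurable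
          show "integrable M (\<lambda>\<omega>. b k * Q (a + Z \<omega>))" using Q_integrable[OF ZM Z(2)] by simp
          show "integrable M (\<lambda>\<omega>. \<omega> (Some 0) - \<omega> None)" using zeta_int by auto
          have "(\<integral>\<omega>. \<omega> (Some 0) - \<omega> None \<partial>M) = (\<integral>\<omega>. \<omega> (Some 0) \<partial>M) - (\<integral>\<omega>. \<omega> None \<partial>M)"
            by (rule Bochner_Integration.integral_diff) (rule zeta_int)+
          then show "(\<integral>\<omega>. \<omega> (Some 0) - \<omega> None \<partial>M) = 0" using zeta_mean[OF p1'] by simp
          show "integrable M (Zs 0)" by (rule Lp_integrable[OF p1 YM Yp])
          show "AE \<omega> in M. Zs 0 \<omega> = b k * Q (a + Z \<omega>) * (\<omega> (Some 0) - \<omega> None)"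
            using Z(3) by eventually_elim (use k in \<open>simp add: Zs_def\<close>)
        qed (use Jn0_disj YM in auto)
      next
        case False
        then have i1: "i \<ge> 1" by simp
        obtain Z Z' where Z: "Z \<in> borel_measurable (FJ (Jn i))" "Z' \<in> borel_measurable (FJ (Jn i))"
          "integrable M Z" "integrable M Z'"
          "AE \<omega> in M. dr i \<omega> = (Q (a + Z \<omega>) - Q (a + Z' \<omega>)) * \<omega> (Some (int i))"
          using Ai[OF i1] by blast
        have ZM: "Z \<in> borel_measurable M" "Z' \<in> borel_measurable M" using Z(1,2) FJ_meas_M by blast+
        show ?thesis
        proof (rule cond_exp_zero[of "Jn i" "{Some (int i)}" "\<lambda>\<omega>. b (k - i) * (Q (a + Z \<omega>) - Q (a + Z' \<omega>))" "\<lambda>\<omega>. \<omega> (Some (int i))"])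
          show "(\<lambda>\<omega>. b (k - i) * (Q (a + Z \<omega>) - Q (a + Z' \<omega>))) \<in> borel_measurable (FJ (Jn i))" using Z(1,2) by measurable
          show "integrable M (\<lambda>\<omega>. b (k - i) * (Q (a + Z \<omega>) - Q (a + Z' \<omega>)))"
            using Q_integrable[OF ZM(1) Z(3)] Q_integrable[OF ZM(2) Z(4)] by auto
          show "integrable M (\<lambda>\<omega>. \<omega> (Some (int i)))" by (rule zeta_int)
          show "(\<integral>\<omega>. \<omega> (Some (int i)) \<partial>M) = 0" using zeta_mean[OF p1'] by simp
          show "integrable M (Zs i)" by (rule Lp_integrable[OF p1 YM Yp])
          show "AE \<omega> in M. Zs i \<omega> = b (k - i) * (Q (a + Z \<omega>) - Q (a + Z' \<omega>)) * \<omega> (Some (int i))"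
            using Z(5) by eventually_elim (use \<open>i < k\<close> in \<open>simp add: Zs_def\<close>)
        qed (use Some_notin_Jn YM in auto)
      qed
    qed
    note RI = rosenthal_apply[OF Ros p1 Ym Yp Yc, of k]
    have sumZ: "(\<Sum>i<k. Zs i \<omega>) = Dr k \<omega>" for \<omega>
    proof -
      have "(\<Sum>i<k. Zs i \<omega>) = (\<Sum>i<k. b (k - i) * dr i \<omega>)" by (simp add: Zs_def)
      also have "\<dots> = Dr k \<omega>" unfolding Dr_def dr_def
        by (rule sum.reindex_bij_witness[where i="\<lambda>j. k - j" and j="\<lambda>i. k - i"]) (auto simp: of_nat_diff)
      finally show ?thesis .
    qed
    have RD: "(\<integral>\<omega>. \<bar>\<Sum>j<k. Zs j \<omega>\<bar> powr p \<partial>M) = (\<integral>\<omega>. \<bar>Dr k \<omega>\<bar> powr p \<partial>M)" by (simp add: sumZ)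
    define e where "e i = \<bar>b (k - i)\<bar> powr p * u i" for i
    have e0: "e i \<ge> 0" for i using u0 by (simp add: e_def)
    have ins: "{..<k} = insert 0 {1..<k}" using k by auto
    have sumsplit: "(\<Sum>j<k. f j) = f 0 + (\<Sum>j\<in>{1..<k}. f j)" for f :: "nat \<Rightarrow> real"
      unfolding ins by (subst sum.insert) auto
    have Kmax: "K * x \<le> max K 0 * x" if "x \<ge> 0" for x using that by (simp add: mult_right_mono)
    show ?thesis
    proof (intro conjI impI)
      assume p2: "p \<le> 2"
      have "(\<integral>\<omega>. \<bar>Dr k \<omega>\<bar> powr p \<partial>M) \<le> K * (\<Sum>j<k. e j)"
        using RI p2 RD EZ unfolding e_def by simp
      also have "\<dots> \<le> max K 0 * (\<Sum>j<k. e j)" by (rule Kmax) (simp add: sum_nonneg e0)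
      finally have "u k \<le> c1 * (max K 0 * (\<Sum>j<k. e j))" using B1 c1 by (meson order.trans mult_left_mono)
      also have "\<dots> = max K 0 * (\<bar>b k\<bar> powr p * C0 + (\<Sum>s\<in>{1..<k}. \<bar>b (k-s)\<bar> powr p * c1 * u s))"
        unfolding sumsplit e_def C0_def by (simp add: sum_distrib_left algebra_simps)
      finally show "u k \<le> max K 0 * (\<bar>b k\<bar> powr p * C0 + (\<Sum>s\<in>{1..<k}. \<bar>b (k-s)\<bar> powr p * c1 * u s))" .
    next
      assume p2: "p > 2"
      define W where "W = (\<Sum>j<k. e j powr (2 / p))"
      have W0: "W \<ge> 0" unfolding W_def by (simp add: sum_nonneg)
      have "(\<integral>\<omega>. \<bar>Dr k \<omega>\<bar> powr p \<partial>M) \<le> K * W powr (p / 2)"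
        using RI p2 RD EZ unfolding e_def W_def by simp
      also have "\<dots> \<le> max K 0 * W powr (p / 2)" by (rule Kmax) simp
      finally have "u k \<le> c1 * (max K 0 * W powr (p / 2))" using B1 c1 by (meson order.trans mult_left_mono)
      also have "\<dots> = max K 0 * (c1 powr (2 / p) * W) powr (p / 2)"
        using c1 W0 p2 by (simp add: powr_mult powr_powr)
      also have "c1 powr (2 / p) * W = (\<bar>b k\<bar> powr p * C0) powr (2 / p)
              + (\<Sum>s\<in>{1..<k}. (\<bar>b (k-s)\<bar> powr p * c1 * u s) powr (2 / p))"
      proof -
        have ee: "c1 powr (2 / p) * e j powr (2 / p) = (\<bar>b (k-j)\<bar> powr p * c1 * u j) powr (2 / p)" for j
          using c1 e0[of j] by (simp add: powr_mult[symmetric] e_def mult_ac)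
        have "c1 powr (2 / p) * W = (\<Sum>j<k. (\<bar>b (k-j)\<bar> powr p * c1 * u j) powr (2 / p))"
          unfolding W_def sum_distrib_left ee ..
        then show ?thesis unfolding sumsplit C0_def by (simp add: mult_ac)
      qed
      finally show "u k \<le> max K 0 * ((\<bar>b k\<bar> powr p * C0) powr (2 / p)
              + (\<Sum>s\<in>{1..<k}. (\<bar>b (k-s)\<bar> powr p * c1 * u s) powr (2 / p))) powr (p / 2)" .
    qed
  qed
  show ?thesis using main C0 unfolding c1_def by blast
qed

end

theorem proposition5:
  fixes p a c \<gamma> L K :: real and \<mu> :: "real measure" and Q :: "real \<Rightarrow> real"
    and b :: "nat \<Rightarrow> real" and g h :: "(nat \<Rightarrow> real) \<Rightarrow> real"
  assumes "p \<ge> 1"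
    and "prob_space \<mu>" and "sets \<mu> = sets borel"
    and "integrable \<mu> (\<lambda>x. \<bar>x\<bar> powr p)"
    and "p > 1 \<longrightarrow> (\<integral>x. x \<partial>\<mu>) = 0"
    and "L \<ge> 0" and "\<forall>x y. \<bar>Q x - Q y\<bar> \<le> L * \<bar>x - y\<bar>"
    and "c > 0" and "\<gamma> > max (1/2) (1/p)"
    and "\<forall>j\<ge>1. \<bar>b j\<bar> < c * real j powr (-\<gamma>)"
    and "rosenthal_const TYPE(omega) p K"
    and "K * (\<integral>x. \<bar>x\<bar> powr p \<partial>\<mu>) * L powr p * Bp p b < 1"
    and "g \<in> borel_measurable (PiM UNIV (\<lambda>_::nat. borel))"
    and "h \<in> borel_measurable (PiM UNIV (\<lambda>_::nat. borel))"
    and "Xsol (iid_space \<mu>) p a b Q (\<lambda>t \<omega>. g (past \<omega> (t - 1)))"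
    and "rsol (iid_space \<mu>) p a b Q (\<lambda>t \<omega>. h (past \<omega> t))"
  shows "(\<lambda>k::nat. deltap (iid_space \<mu>) p g (int k - 1)) \<in> O(\<lambda>k. real k powr (-\<gamma>))
       \<and> (\<lambda>k::nat. deltap (iid_space \<mu>) p h (int k)) \<in> O(\<lambda>k. real k powr (-\<gamma>))"
proof -
  interpret model \<mu> p a L K Q b
    by (rule model.intro[OF iid.intro[OF assms(2,3)] model_axioms.intro[OF assms(1,4,5,6,7,11)]])
  have c1: "mup * L powr p \<ge> 0" using mup_nonneg by simp
  have contr: "K * (mup * L powr p) * Bp p b < 1" using assms(12) by (simp add: mup_def mult_ac)
  define uX where "uX = (\<lambda>k::nat. \<integral>\<omega>. \<bar>g (past \<omega> (int k - 1)) - g (past' \<omega> (int k - 1))\<bar> powr p \<partial>M)"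
  define uR where "uR = (\<lambda>k::nat. \<integral>\<omega>. \<bar>h (past \<omega> (int k)) - h (past' \<omega> (int k))\<bar> powr p \<partial>M)"
  obtain C0 where C0: "C0 \<ge> 0" and recX: "\<forall>k\<ge>1.
    (p \<le> 2 \<longrightarrow> uX k \<le> max K 0 * (\<bar>b k\<bar> powr p * C0 + (\<Sum>s\<in>{1..<k}. \<bar>b (k-s)\<bar> powr p * (mup * L powr p) * uX s))) \<and>
    (p > 2 \<longrightarrow> uX k \<le> max K 0 * ((\<bar>b k\<bar> powr p * C0) powr (2 / p)
              + (\<Sum>s\<in>{1..<k}. (\<bar>b (k-s)\<bar> powr p * (mup * L powr p) * uX s) powr (2 / p))) powr (p / 2))"
    using X_part[OF assms(13) assms(15)] unfolding uX_def by blast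
  obtain C1 where C1: "C1 \<ge> 0" and recR: "\<forall>k\<ge>1.
    (p \<le> 2 \<longrightarrow> uR k \<le> max K 0 * (\<bar>b k\<bar> powr p * C1 + (\<Sum>s\<in>{1..<k}. \<bar>b (k-s)\<bar> powr p * (mup * L powr p) * uR s))) \<and>
    (p > 2 \<longrightarrow> uR k \<le> max K 0 * ((\<bar>b k\<bar> powr p * C1) powr (2 / p)
              + (\<Sum>s\<in>{1..<k}. (\<bar>b (k-s)\<bar> powr p * (mup * L powr p) * uR s) powr (2 / p))) powr (p / 2))"
    using R_part[OF assms(14) assms(16)] unfolding uR_def by blast
  have uX0: "\<forall>k. uX k \<ge> 0" unfolding uX_def by simp
  have uR0: "\<forall>k. uR k \<ge> 0" unfolding uR_def by simp
  have OX: "(\<lambda>k. uX k powr (1 / p)) \<in> O(\<lambda>k. real k powr (-\<gamma>))"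
    by (rule final_rate[OF assms(1) uX0 c1 C0 assms(8,9,10) contr]) (use recX in auto)
  have OR: "(\<lambda>k. uR k powr (1 / p)) \<in> O(\<lambda>k. real k powr (-\<gamma>))"
    by (rule final_rate[OF assms(1) uR0 c1 C1 assms(8,9,10) contr]) (use recR in auto)
  have eX: "(\<lambda>k::nat. deltap (iid_space \<mu>) p g (int k - 1)) = (\<lambda>k. uX k powr (1 / p))"
    unfolding uX_def deltap_def ..
  have eR: "(\<lambda>k::nat. deltap (iid_space \<mu>) p h (int k)) = (\<lambda>k. uR k powr (1 / p))"
    unfolding uR_def deltap_def ..
  show ?thesis unfolding eX eR using OX OR by blast
qed

end
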